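(* For a bounded operator $T$ on $\ell^2(X)$ ($X$ any index set), \[\|T\|_m\le\|\Delta(|T^*|)\|^{1/2}\,\|\Delta(|T|)\|^{1/2}=\big\||T^*|\big\|_m^{1/2}\,\big\||T|\big\|_m^{1/2}.\]
   Context: $\|T\|_m$ denotes the norm of the Schur multiplier $R=[r_{ij}]\mapsto[t_{ij}r_{ij}]$ on $\mathcal B(\ell^2(X))$, where $[t_{ij}]$ is the matrix of $T$ in the standard basis. $\Delta$ is the expectation onto the diagonal (it replaces all off-diagonal matrix entries by $0$). $|T|=(T^*T)^{1/2}$. *)

theory Defs
  imports "HOL-Analysis.Analysis"
begin

text \<open>Bounded operators on l2(X), X an arbitrary index type 'x, are represented by their
matrices in the standard basis: t i j = <T e_j, e_i>.\<close>

type_synonym 'x mat = "'x \<Rightarrow> 'x \<Rightarrow> complex"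

definition l2 :: "('x \<Rightarrow> complex) set" where
  "l2 = {v. (\<lambda>i. (cmod (v i))\<^sup>2) summable_on UNIV}"

definition l2norm :: "('x \<Rightarrow> complex) \<Rightarrow> real" where
  "l2norm v = sqrt (infsum (\<lambda>i. (cmod (v i))\<^sup>2) UNIV)"

definition l2inner :: "('x \<Rightarrow> complex) \<Rightarrow> ('x \<Rightarrow> complex) \<Rightarrow> complex" where
  "l2inner u v = infsum (\<lambda>i. u i * cnj (v i)) UNIV"

definition mat_apply :: "'x mat \<Rightarrow> ('x \<Rightarrow> complex) \<Rightarrow> ('x \<Rightarrow> complex)" where
  "mat_apply t v = (\<lambda>i. infsum (\<lambda>j. t i j * v j) UNIV)"

definition bounded_mat :: "'x mat \<Rightarrow> bool" where
  "bounded_mat t \<longleftrightarrow> (\<exists>C. \<forall>v\<in>l2. (\<forall>i. (\<lambda>j. t i j * v j) summable_on UNIV)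
      \<and> mat_apply t v \<in> l2 \<and> l2norm (mat_apply t v) \<le> C * l2norm v)"

definition opnorm :: "'x mat \<Rightarrow> ennreal" where
  "opnorm t = (if bounded_mat t
     then ennreal (Sup {l2norm (mat_apply t v) | v. v \<in> l2 \<and> l2norm v \<le> 1})
     else \<infinity>)"

definition adjoint :: "'x mat \<Rightarrow> 'x mat" where
  "adjoint t = (\<lambda>i j. cnj (t j i))"

definition mat_mult :: "'x mat \<Rightarrow> 'x mat \<Rightarrow> 'x mat" where
  "mat_mult s t = (\<lambda>i k. infsum (\<lambda>j. s i j * t j k) UNIV)"

definition positive_mat :: "'x mat \<Rightarrow> bool" where
  "positive_mat s \<longleftrightarrow> bounded_mat s \<and>
     (\<forall>v\<in>l2. l2inner (mat_apply s v) v \<in> \<real> \<and> Re (l2inner (mat_apply s v) v) \<ge> 0)"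

definition mat_abs :: "'x mat \<Rightarrow> 'x mat" where
  "mat_abs t = (THE s. positive_mat s \<and> mat_mult s s = mat_mult (adjoint t) t)"

definition diag_part :: "'x mat \<Rightarrow> 'x mat" where
  "diag_part t = (\<lambda>i j. if i = j then t i j else 0)"

definition schur_prod :: "'x mat \<Rightarrow> 'x mat \<Rightarrow> 'x mat" where
  "schur_prod t r = (\<lambda>i j. t i j * r i j)"

definition schur_norm :: "'x mat \<Rightarrow> ennreal" where
  "schur_norm t = Sup {opnorm (schur_prod t r) | r. bounded_mat r \<and> opnorm r \<le> 1}"

definition ennsqrt :: "ennreal \<Rightarrow> ennreal" where
  "ennsqrt x = (if x = \<infinity> then \<infinity> else ennreal (sqrt (enn2real x)))"

end

theory Submission
  imports Defs
begin


lemma l2_iff: "v \<in> l2 \<longleftrightarrow> (\<lambda>i. (cmod (v i))\<^sup>2) summable_on UNIV"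
  by (simp add: l2_def)

lemma nonneg_bound_summable:
  fixes f :: "'a \<Rightarrow> real"
  assumes "\<And>x. f x \<ge> 0" "\<And>F. finite F \<Longrightarrow> sum f F \<le> C"
  shows "f summable_on UNIV" "infsum f UNIV \<le> C"
proof -
  show s: "f summable_on UNIV"
    by (rule nonneg_bdd_above_summable_on) (use assms in \<open>auto intro!: bdd_aboveI\<close>)
  show "infsum f UNIV \<le> C"
    by (rule infsum_le_finite_sums[OF s]) (use assms in auto)
qed

lemma sum_le_infsum_nonneg:
  fixes f :: "'a \<Rightarrow> real"
  assumes "f summable_on UNIV" "\<And>x. f x \<ge> 0" "finite F"
  shows "sum f F \<le> infsum f UNIV"
  by (rule finite_sum_le_infsum) (use assms in auto)

lemma l2_zero[simp]: "(\<lambda>_. 0) \<in> l2"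
  by (simp add: l2_def)

lemma l2_add: assumes "u \<in> l2" "v \<in> l2" shows "(\<lambda>i. u i + v i) \<in> l2"
proof -
  have "(\<lambda>i. 2 * (cmod (u i))\<^sup>2 + 2 * (cmod (v i))\<^sup>2) summable_on UNIV"
    using assms by (intro summable_on_add summable_on_cmult_right) (auto simp: l2_def)
  moreover have "(cmod (u i + v i))\<^sup>2 \<le> 2 * (cmod (u i))\<^sup>2 + 2 * (cmod (v i))\<^sup>2" for i
  proof -
    have "cmod (u i + v i) \<le> cmod (u i) + cmod (v i)" by (rule norm_triangle_ineq)
    hence "(cmod (u i + v i))\<^sup>2 \<le> (cmod (u i) + cmod (v i))\<^sup>2"
      by (intro power_mono) auto
    also have "\<dots> \<le> 2 * (cmod (u i))\<^sup>2 + 2 * (cmod (v i))\<^sup>2"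
      using sum_squares_bound[of "cmod (u i)" "cmod (v i)"] by (simp add: power2_eq_square algebra_simps)
    finally show ?thesis .
  qed
  ultimately show ?thesis unfolding l2_def
    by (auto intro: summable_on_comparison_test)
qed

lemma l2_scale: assumes "u \<in> l2" shows "(\<lambda>i. c * u i) \<in> l2"
proof -
  have "(\<lambda>i. (cmod c)\<^sup>2 * (cmod (u i))\<^sup>2) summable_on UNIV"
    using assms by (intro summable_on_cmult_right) (auto simp: l2_def)
  thus ?thesis by (simp add: l2_def norm_mult power_mult_distrib)
qed

lemma l2_uminus: assumes "u \<in> l2" shows "(\<lambda>i. - u i) \<in> l2"
  using assms by (simp add: l2_def)

lemma l2_diff: assumes "u \<in> l2" "v \<in> l2" shows "(\<lambda>i. u i - v i) \<in> l2"
  using l2_add[OF assms(1) l2_uminus[OF assms(2)]] by simp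

lemma l2_cnj: assumes "u \<in> l2" shows "(\<lambda>i. cnj (u i)) \<in> l2"
  using assms by (simp add: l2_def)

lemma l2_prod_abs_summable:
  assumes "u \<in> l2" "v \<in> l2"
  shows "(\<lambda>i. cmod (u i) * cmod (v i)) summable_on UNIV"
proof -
  have "(\<lambda>i. (cmod (u i))\<^sup>2 + (cmod (v i))\<^sup>2) summable_on UNIV"
    using assms by (intro summable_on_add) (auto simp: l2_def)
  moreover have "cmod (u i) * cmod (v i) \<le> (cmod (u i))\<^sup>2 + (cmod (v i))\<^sup>2" for i
  proof -
    have "0 \<le> cmod (u i) * cmod (v i)" by simp
    thus ?thesis using sum_squares_bound[of "cmod (u i)" "cmod (v i)", unfolded mult.assoc] by linarith
  qed
  ultimately show ?thesis by (auto intro: summable_on_comparison_test)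
qed

lemma l2_prod_summable:
  assumes "u \<in> l2" "v \<in> l2"
  shows "(\<lambda>i. u i * v i) summable_on UNIV"
  using l2_prod_abs_summable[OF assms]
  by (simp add: summable_on_iff_abs_summable_on_complex norm_mult)

lemma l2_inner_summable:
  assumes "u \<in> l2" "v \<in> l2"
  shows "(\<lambda>i. u i * cnj (v i)) summable_on UNIV"
  using l2_prod_summable[OF assms(1) l2_cnj[OF assms(2)]] .

lemma l2inner_self: assumes "u \<in> l2"
  shows "l2inner u u = complex_of_real (infsum (\<lambda>i. (cmod (u i))\<^sup>2) UNIV)"
proof -
  have "l2inner u u = infsum (\<lambda>i. complex_of_real ((cmod (u i))\<^sup>2)) UNIV"
    unfolding l2inner_def by (rule infsum_cong) (metis complex_norm_square)
  also have "\<dots> = complex_of_real (infsum (\<lambda>i. (cmod (u i))\<^sup>2) UNIV)"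
    using has_sum_of_real[OF has_sum_infsum[OF assms[unfolded l2_iff]]] by (rule infsumI)
  finally show ?thesis .
qed

lemma l2_of_bounded:
  assumes "\<And>F. finite F \<Longrightarrow> (\<Sum>i\<in>F. (cmod (v i))\<^sup>2) \<le> C"
  shows "v \<in> l2" "infsum (\<lambda>i. (cmod (v i))\<^sup>2) UNIV \<le> C"
  using nonneg_bound_summable[of "\<lambda>i. (cmod (v i))\<^sup>2" C] assms by (auto simp: l2_def)

typedef 'x ell2 = "l2 :: ('x \<Rightarrow> complex) set" morphisms vc Abs_ell2
  by (rule exI[of _ "\<lambda>_. 0"]) simp

setup_lifting type_definition_ell2

lemma vc_l2[simp]: "vc x \<in> l2"
  by (rule vc)

lemma vc_inject': "x = y \<longleftrightarrow> (\<forall>i. vc x i = vc y i)"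
  by (metis ext vc_inject)

instantiation ell2 :: (type) real_inner
begin
lift_definition zero_ell2 :: "'a ell2" is "\<lambda>_. 0" by simp
lift_definition plus_ell2 :: "'a ell2 \<Rightarrow> 'a ell2 \<Rightarrow> 'a ell2" is "\<lambda>u v i. u i + v i"
  by (rule l2_add)
lift_definition minus_ell2 :: "'a ell2 \<Rightarrow> 'a ell2 \<Rightarrow> 'a ell2" is "\<lambda>u v i. u i - v i"
  by (rule l2_diff)
lift_definition uminus_ell2 :: "'a ell2 \<Rightarrow> 'a ell2" is "\<lambda>u i. - u i"
  by (rule l2_uminus)
lift_definition scaleR_ell2 :: "real \<Rightarrow> 'a ell2 \<Rightarrow> 'a ell2" is "\<lambda>r u i. complex_of_real r * u i"
  by (rule l2_scale)
lift_definition inner_ell2 :: "'a ell2 \<Rightarrow> 'a ell2 \<Rightarrow> real" is "\<lambda>u v. Re (l2inner u v)" .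
definition norm_ell2 :: "'a ell2 \<Rightarrow> real" where "norm_ell2 u = sqrt (inner u u)"
definition sgn_ell2 :: "'a ell2 \<Rightarrow> 'a ell2" where "sgn_ell2 u = inverse (norm u) *\<^sub>R u"
definition dist_ell2 :: "'a ell2 \<Rightarrow> 'a ell2 \<Rightarrow> real" where "dist_ell2 u v = norm (u - v)"
definition uniformity_ell2 :: "('a ell2 \<times> 'a ell2) filter" where
  "uniformity_ell2 = (INF e\<in>{0<..}. principal {(x, y). dist x y < e})"
definition open_ell2 :: "'a ell2 set \<Rightarrow> bool" where
  "open_ell2 U = (\<forall>x\<in>U. \<forall>\<^sub>F (x', y) in uniformity. x' = x \<longrightarrow> y \<in> U)"

instance
proof
  fix x y z :: "'a ell2" and a b :: real
  show "x + y + z = x + (y + z)" by transfer (simp add: add.assoc)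
  show "x + y = y + x" by transfer (simp add: add.commute)
  show "0 + x = x" by transfer simp
  show "- x + x = 0" by transfer simp
  show "x - y = x + - y" by transfer simp
  show "a *\<^sub>R (x + y) = a *\<^sub>R x + a *\<^sub>R y" by transfer (simp add: algebra_simps)
  show "(a + b) *\<^sub>R x = a *\<^sub>R x + b *\<^sub>R x" by transfer (simp add: algebra_simps)
  show "a *\<^sub>R b *\<^sub>R x = (a * b) *\<^sub>R x" by transfer (simp add: algebra_simps)
  show "1 *\<^sub>R x = x" by transfer simp
  show "sgn x = inverse (norm x) *\<^sub>R x" by (simp add: sgn_ell2_def)
  show "dist x y = norm (x - y)" by (simp add: dist_ell2_def)
  show "inner x y = inner y x"
  proof transfer
    fix x y :: "'a \<Rightarrow> complex"
    have "infsum (\<lambda>i. y i * cnj (x i)) UNIV = infsum (\<lambda>i. cnj (x i * cnj (y i))) UNIV"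
      by (simp add: mult.commute)
    hence "l2inner y x = cnj (l2inner x y)" unfolding l2inner_def by (simp only: infsum_cnj)
    thus "Re (l2inner x y) = Re (l2inner y x)" by simp
  qed
  show "inner (x + y) z = inner x z + inner y z"
    by transfer (simp add: l2inner_def distrib_right infsum_add l2_inner_summable)
  show "inner (a *\<^sub>R x) y = a * inner x y"
    by transfer (simp add: l2inner_def mult.assoc infsum_cmult_right')
  show "0 \<le> inner x x"
    by transfer (simp add: l2inner_self infsum_nonneg)
  show "(inner x x = 0) = (x = 0)"
  proof transfer
    fix x :: "'a \<Rightarrow> complex" assume x: "x \<in> l2"
    have "Re (l2inner x x) = 0 \<longleftrightarrow> (\<forall>i. x i = 0)"
    proof
      assume "Re (l2inner x x) = 0"
      hence "infsum (\<lambda>i. (cmod (x i))\<^sup>2) UNIV \<le> 0" by (simp add: l2inner_self x)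
      hence "(cmod (x i))\<^sup>2 = 0" for i
        using nonneg_infsum_le_0D[of "\<lambda>i. (cmod (x i))\<^sup>2" UNIV i] x by (simp add: l2_def)
      thus "\<forall>i. x i = 0" by simp
    qed (simp add: l2inner_def)
    thus "(Re (l2inner x x) = 0) = (x = (\<lambda>_. 0))" by auto
  qed
  show "norm x = sqrt (inner x x)" by (simp add: norm_ell2_def)
qed (simp_all add: uniformity_ell2_def open_ell2_def)
end

lemma vc_simps[simp]:
  "vc (x + y) i = vc x i + vc y i"
  "vc (x - y) i = vc x i - vc y i"
  "vc (- x) i = - vc x i"
  "vc (r *\<^sub>R x) i = complex_of_real r * vc x i"
  "vc 0 i = 0"
  by (transfer, simp)+

lemma norm_ell2_sq: "(norm x)\<^sup>2 = infsum (\<lambda>i. (cmod (vc x i))\<^sup>2) UNIV"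
  by (simp add: norm_eq_sqrt_inner inner_ell2.rep_eq l2inner_self infsum_nonneg)

lemma sum_le_norm_sq: "finite F \<Longrightarrow> (\<Sum>i\<in>F. (cmod (vc x i))\<^sup>2) \<le> (norm x)\<^sup>2"
  unfolding norm_ell2_sq by (rule sum_le_infsum_nonneg) (use vc_l2[of x] in \<open>auto simp: l2_def\<close>)

lemma coord_le_norm: "cmod (vc x i) \<le> norm x"
proof -
  have "(cmod (vc x i))\<^sup>2 \<le> (norm x)\<^sup>2" using sum_le_norm_sq[of "{i}" x] by simp
  thus ?thesis by (simp add: power2_le_iff_abs_le)
qed

instance ell2 :: (type) complete_space
proof
  fix X :: "nat \<Rightarrow> 'a ell2" assume C: "Cauchy X"
  have pc: "Cauchy (\<lambda>n. vc (X n) i)" for i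
  proof (rule metric_CauchyI)
    fix e :: real assume "e > 0"
    then obtain N where N: "\<forall>m\<ge>N. \<forall>n\<ge>N. dist (X m) (X n) < e" using C metric_CauchyD by blast
    show "\<exists>M. \<forall>m\<ge>M. \<forall>n\<ge>M. dist (vc (X m) i) (vc (X n) i) < e"
    proof (intro exI allI impI)
      fix m n assume "m \<ge> N" "n \<ge> N"
      have "dist (vc (X m) i) (vc (X n) i) = cmod (vc (X m - X n) i)" by (simp only: dist_norm vc_simps)
      also have "\<dots> \<le> dist (X m) (X n)" using coord_le_norm[of "X m - X n" i] by (simp add: dist_norm)
      also have "\<dots> < e" using N \<open>m \<ge> N\<close> \<open>n \<ge> N\<close> by blast
      finally show "dist (vc (X m) i) (vc (X n) i) < e" .
    qed
  qed
  define f where "f i = lim (\<lambda>n. vc (X n) i)" for i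
  have fl: "(\<lambda>n. vc (X n) i) \<longlonglongrightarrow> f i" for i
    unfolding f_def using pc[of i] by (simp add: Cauchy_convergent_iff convergent_LIMSEQ_iff)
  have key: "\<exists>N. \<forall>n\<ge>N. (\<lambda>i. vc (X n) i - f i) \<in> l2 \<and>
      infsum (\<lambda>i. (cmod (vc (X n) i - f i))\<^sup>2) UNIV \<le> e\<^sup>2" if "e > 0" for e
  proof -
    obtain N where N: "\<forall>m\<ge>N. \<forall>n\<ge>N. dist (X m) (X n) < e" using C metric_CauchyD \<open>e>0\<close> by blast
    have "(\<lambda>i. vc (X n) i - f i) \<in> l2 \<and> infsum (\<lambda>i. (cmod (vc (X n) i - f i))\<^sup>2) UNIV \<le> e\<^sup>2"
      if "n \<ge> N" for n
    proof -
      have "(\<Sum>i\<in>F. (cmod (vc (X n) i - f i))\<^sup>2) \<le> e\<^sup>2" if "finite F" for F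
      proof (rule tendsto_le[OF trivial_limit_sequentially])
        show "(\<lambda>m. \<Sum>i\<in>F. (cmod (vc (X n) i - vc (X m) i))\<^sup>2) \<longlonglongrightarrow> (\<Sum>i\<in>F. (cmod (vc (X n) i - f i))\<^sup>2)"
          by (intro tendsto_intros fl)
        show "(\<lambda>m. e\<^sup>2) \<longlonglongrightarrow> e\<^sup>2" by simp
        show "\<forall>\<^sub>F m in sequentially. (\<Sum>i\<in>F. (cmod (vc (X n) i - vc (X m) i))\<^sup>2) \<le> e\<^sup>2"
          unfolding eventually_sequentially
        proof (intro exI allI impI)
          fix m assume "m \<ge> N"
          have "(\<Sum>i\<in>F. (cmod (vc (X n) i - vc (X m) i))\<^sup>2) = (\<Sum>i\<in>F. (cmod (vc (X n - X m) i))\<^sup>2)"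
            by simp
          also have "\<dots> \<le> (norm (X n - X m))\<^sup>2" by (rule sum_le_norm_sq[OF \<open>finite F\<close>])
          also have "\<dots> \<le> e\<^sup>2" using N \<open>m \<ge> N\<close> \<open>n \<ge> N\<close>
            by (intro power_mono) (auto simp: dist_norm less_imp_le)
          finally show "(\<Sum>i\<in>F. (cmod (vc (X n) i - vc (X m) i))\<^sup>2) \<le> e\<^sup>2" .
        qed
      qed
      thus ?thesis using l2_of_bounded[of "\<lambda>i. vc (X n) i - f i"] by blast
    qed
    thus ?thesis by blast
  qed
  have fl2: "f \<in> l2"
  proof -
    obtain N where "\<forall>n\<ge>N. (\<lambda>i. vc (X n) i - f i) \<in> l2" using key[of 1] by auto
    hence "(\<lambda>i. vc (X N) i - f i) \<in> l2" by blast
    from l2_diff[OF vc_l2[of "X N"] this] show ?thesis by simp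
  qed
  have "X \<longlonglongrightarrow> Abs_ell2 f"
  proof (rule metric_LIMSEQ_I)
    fix e :: real assume "e > 0"
    then obtain N where N: "\<forall>n\<ge>N. infsum (\<lambda>i. (cmod (vc (X n) i - f i))\<^sup>2) UNIV \<le> (e/2)\<^sup>2"
      using key[of "e/2"] by auto
    show "\<exists>N. \<forall>n\<ge>N. dist (X n) (Abs_ell2 f) < e"
    proof (intro exI allI impI)
      fix n assume "n \<ge> N"
      have "(dist (X n) (Abs_ell2 f))\<^sup>2 = infsum (\<lambda>i. (cmod (vc (X n) i - f i))\<^sup>2) UNIV"
        by (simp add: dist_norm norm_ell2_sq Abs_ell2_inverse fl2)
      also have "\<dots> \<le> (e/2)\<^sup>2" using N \<open>n \<ge> N\<close> by auto
      also have "\<dots> < e\<^sup>2" using \<open>e > 0\<close> by (simp add: power2_eq_square)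
      finally show "dist (X n) (Abs_ell2 f) < e" using \<open>e>0\<close>
        by (smt (verit) power_mono zero_le_dist)
    qed
  qed
  thus "convergent X" by (rule convergentI)
qed



lift_definition cscale :: "complex \<Rightarrow> 'x ell2 \<Rightarrow> 'x ell2" (infixr \<open>*\<^sub>C\<close> 75) is "\<lambda>c u i. c * u i"
  by (rule l2_scale)

lift_definition cinner :: "'x ell2 \<Rightarrow> 'x ell2 \<Rightarrow> complex" is l2inner .

lemma vc_cscale[simp]: "vc (c *\<^sub>C x) i = c * vc x i"
  by transfer simp

lemma vc_sum: "vc (sum f F) i = (\<Sum>j\<in>F. vc (f j) i)"
  by (induction F rule: infinite_finite_induct) auto

lemma cscale_add_right: "c *\<^sub>C (x + y) = c *\<^sub>C x + c *\<^sub>C y"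
  and cscale_add_left: "(a + b) *\<^sub>C x = a *\<^sub>C x + b *\<^sub>C x"
  and cscale_cscale[simp]: "a *\<^sub>C b *\<^sub>C x = (a * b) *\<^sub>C x"
  and cscale_one[simp]: "1 *\<^sub>C x = x"
  and cscale_zero_right[simp]: "c *\<^sub>C 0 = 0"
  and cscale_zero_left[simp]: "0 *\<^sub>C x = 0"
  and cscale_minus_right: "c *\<^sub>C (- x) = - (c *\<^sub>C x)"
  and cscale_diff_right: "c *\<^sub>C (x - y) = c *\<^sub>C x - c *\<^sub>C y"
  and scaleR_cscale: "r *\<^sub>R x = complex_of_real r *\<^sub>C x"
  and cscale_scaleR: "c *\<^sub>C (r *\<^sub>R x) = r *\<^sub>R (c *\<^sub>C x)"
  by (auto simp: vc_inject' algebra_simps)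

lemma cscale_sum_right: "c *\<^sub>C sum f F = (\<Sum>j\<in>F. c *\<^sub>C f j)"
  by (simp add: vc_inject' vc_sum sum_distrib_left)

lemma norm_cscale[simp]: "norm (c *\<^sub>C x) = cmod c * norm x"
proof -
  have "(norm (c *\<^sub>C x))\<^sup>2 = infsum (\<lambda>i. (cmod c)\<^sup>2 * (cmod (vc x i))\<^sup>2) UNIV"
    by (simp add: norm_ell2_sq norm_mult power_mult_distrib)
  also have "\<dots> = (cmod c)\<^sup>2 * (norm x)\<^sup>2"
    by (simp add: norm_ell2_sq infsum_cmult_right')
  finally have "(norm (c *\<^sub>C x))\<^sup>2 = (cmod c * norm x)\<^sup>2" by (simp add: power_mult_distrib)
  thus ?thesis by (simp add: power2_eq_iff_nonneg)
qed

lemma bounded_linear_cscale[simp]: "bounded_linear (cscale c)"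
  by (rule bounded_linear_intro[of _ "cmod c"]) (auto simp: cscale_add_right cscale_scaleR)

lemma cinner_add_left: "cinner (x + y) z = cinner x z + cinner y z"
  by transfer (simp add: l2inner_def distrib_right infsum_add l2_inner_summable)

lemma cinner_add_right: "cinner x (y + z) = cinner x y + cinner x z"
  by transfer (simp add: l2inner_def distrib_left infsum_add l2_inner_summable)

lemma cinner_cscale_left[simp]: "cinner (c *\<^sub>C x) y = c * cinner x y"
  by transfer (simp add: l2inner_def mult.assoc infsum_cmult_right')

lemma cinner_cscale_right[simp]: "cinner x (c *\<^sub>C y) = cnj c * cinner x y"
proof transfer
  fix x y :: "'a \<Rightarrow> complex" and c
  have "(\<lambda>i. x i * cnj (c * y i)) = (\<lambda>i. cnj c * (x i * cnj (y i)))" by (auto simp: algebra_simps)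
  thus "l2inner x (\<lambda>i. c * y i) = cnj c * l2inner x y" unfolding l2inner_def
    by (simp only: infsum_cmult_right')
qed

lemma cinner_commute: "cinner y x = cnj (cinner x y)"
proof transfer
  fix x y :: "'a \<Rightarrow> complex"
  have "infsum (\<lambda>i. y i * cnj (x i)) UNIV = infsum (\<lambda>i. cnj (x i * cnj (y i))) UNIV"
    by (simp add: mult.commute)
  thus "l2inner y x = cnj (l2inner x y)" unfolding l2inner_def by (simp only: infsum_cnj)
qed

lemma Re_cinner: "Re (cinner x y) = inner x y"
  by transfer simp

lemma cinner_self: "cinner x x = complex_of_real ((norm x)\<^sup>2)"
  by (simp add: cinner.rep_eq l2inner_self norm_ell2_sq)

lemma cinner_zero_left[simp]: "cinner 0 y = 0" and cinner_zero_right[simp]: "cinner x 0 = 0"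
  by (transfer, simp add: l2inner_def)+

lemma cinner_minus_left[simp]: "cinner (- x) y = - cinner x y"
  by transfer (simp add: l2inner_def infsum_uminus)

lemma cinner_minus_right[simp]: "cinner x (- y) = - cinner x y"
  by transfer (simp add: l2inner_def infsum_uminus)

lemma cinner_diff_left: "cinner (x - y) z = cinner x z - cinner y z"
  using cinner_add_left[of x "- y" z] by simp

lemma cinner_diff_right: "cinner x (y - z) = cinner x y - cinner x z"
  using cinner_add_right[of x y "- z"] by simp

lemma cinner_scaleR_left[simp]: "cinner (r *\<^sub>R x) y = complex_of_real r * cinner x y"
  by (simp add: scaleR_cscale)

lemma cinner_scaleR_right[simp]: "cinner x (r *\<^sub>R y) = complex_of_real r * cinner x y"
  by (simp add: scaleR_cscale)

lemma cinner_sum_left: "cinner (sum f F) y = (\<Sum>j\<in>F. cinner (f j) y)"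
  by (induction F rule: infinite_finite_induct) (auto simp: cinner_add_left)

lemma cinner_sum_right: "cinner y (sum f F) = (\<Sum>j\<in>F. cinner y (f j))"
  by (induction F rule: infinite_finite_induct) (auto simp: cinner_add_right)

lemma cinner_cauchy_schwarz: "cmod (cinner x y) \<le> norm x * norm y"
proof (cases "cinner x y = 0")
  case False
  define w where "w = cinner x y"
  have "(cmod w)\<^sup>2 = Re (cnj w * w)"
    by (metis complex_norm_square mult.commute Re_complex_of_real)
  also have "\<dots> = Re (cinner (cnj w *\<^sub>C x) y)" by (simp add: w_def)
  also have "\<dots> = inner (cnj w *\<^sub>C x) y" by (rule Re_cinner)
  also have "\<dots> \<le> norm (cnj w *\<^sub>C x) * norm y" by (rule norm_cauchy_schwarz)
  also have "\<dots> = cmod w * (norm x * norm y)" by simp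
  finally have "cmod w * cmod w \<le> cmod w * (norm x * norm y)" by (simp add: power2_eq_square)
  moreover have "cmod w > 0" using False w_def by simp
  ultimately show ?thesis unfolding w_def by simp
qed simp

lemma bounded_linear_cinner_left[simp]: "bounded_linear (\<lambda>x. cinner x y)"
  by (rule bounded_linear_intro[of _ "norm y"])
     (auto simp: cinner_add_left cinner_cauchy_schwarz mult.commute scaleR_conv_of_real)

lemma bounded_linear_cinner_right[simp]: "bounded_linear (\<lambda>y. cinner x y)"
  using cinner_cauchy_schwarz[of x]
  by (intro bounded_linear_intro[of _ "norm x"]) (auto simp: cinner_add_right scaleR_conv_of_real mult.commute)

lemma bounded_linear_vc[simp]: "bounded_linear (\<lambda>x. vc x i)"
  by (rule bounded_linear_intro[of _ 1]) (auto simp: coord_le_norm scaleR_conv_of_real)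

lemma cinner_eq_zero_iff: "cinner x x = 0 \<longleftrightarrow> x = 0"
  by (simp add: cinner_self)

lemma ell2_eqI_cinner: "(\<And>z. cinner x z = cinner y z) \<Longrightarrow> x = y"
  by (metis cinner_diff_left cinner_eq_zero_iff eq_iff_diff_eq_0)

lemma has_sum_finite_support:
  assumes "finite F" "\<And>i. i \<notin> F \<Longrightarrow> f i = 0"
  shows "(f has_sum sum f F) UNIV"
proof -
  have "(f has_sum sum f F) F" using assms(1) by (rule has_sum_finite)
  thus ?thesis by (subst has_sum_cong_neutral[of F UNIV f f]) (use assms in auto)
qed

lift_definition ket :: "'x \<Rightarrow> 'x ell2" is "\<lambda>j i. if i = j then 1 else 0"
proof -
  fix j :: 'x
  show "(\<lambda>i. if i = j then 1 else 0 :: complex) \<in> l2"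
    unfolding l2_def mem_Collect_eq
    by (rule finite_nonzero_values_imp_summable_on, rule finite_subset[of _ "{j}"]) auto
qed

lemma vc_ket: "vc (ket j) i = (if i = j then 1 else 0)"
  by transfer simp

lemma cinner_ket_right[simp]: "cinner x (ket j) = vc x j"
proof -
  have "((\<lambda>i. vc x i * cnj (vc (ket j) i)) has_sum (\<Sum>i\<in>{j}. vc x i * cnj (vc (ket j) i))) UNIV"
    by (rule has_sum_finite_support) (auto simp: vc_ket)
  thus ?thesis by (simp add: cinner.rep_eq l2inner_def vc_ket infsumI)
qed

lemma cinner_ket_left[simp]: "cinner (ket j) x = cnj (vc x j)"
  by (metis cinner_commute cinner_ket_right)

lemma norm_ket[simp]: "norm (ket j) = 1"
proof -
  have "Re (cinner (ket j) (ket j)) = (norm (ket j))\<^sup>2" by (simp only: cinner_self Re_complex_of_real)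
  moreover have "Re (cinner (ket j) (ket j)) = 1" by (simp add: vc_ket)
  ultimately have "(norm (ket j))\<^sup>2 = 1" by simp
  thus ?thesis by (metis real_sqrt_abs abs_norm_cancel real_sqrt_one)
qed

lemma ell2_expansion: "((\<lambda>j. vc v j *\<^sub>C ket j) has_sum v) UNIV"
proof -
  define S where "S F = (\<Sum>j\<in>F. vc v j *\<^sub>C ket j)" for F
  have vS: "vc (S F) i = (if finite F \<and> i \<in> F then vc v i else 0)" for F i
    by (cases "finite F") (auto simp: S_def vc_sum vc_ket if_distrib sum.delta cong: if_cong)
  have hs: "((\<lambda>i. (cmod (vc v i))\<^sup>2) has_sum (norm v)\<^sup>2) UNIV"
    using vc_l2[of v] by (simp add: norm_ell2_sq l2_def)
  have nsq: "(norm (v - S F))\<^sup>2 = (norm v)\<^sup>2 - (\<Sum>i\<in>F. (cmod (vc v i))\<^sup>2)" if "finite F" for F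
  proof -
    have h2: "((\<lambda>i. if i \<in> F then (cmod (vc v i))\<^sup>2 else 0) has_sum (\<Sum>i\<in>F. (cmod (vc v i))\<^sup>2)) UNIV"
      using has_sum_finite_support[OF that, of "\<lambda>i. if i \<in> F then (cmod (vc v i))\<^sup>2 else 0"]
      by simp
    have eq: "(\<lambda>i. (cmod (vc v i))\<^sup>2) = (\<lambda>i. (cmod (vc (v - S F) i))\<^sup>2 + (if i \<in> F then (cmod (vc v i))\<^sup>2 else 0))"
      using that by (auto simp: vS)
    have "(norm v)\<^sup>2 = infsum (\<lambda>i. (cmod (vc (v - S F) i))\<^sup>2 + (if i \<in> F then (cmod (vc v i))\<^sup>2 else 0)) UNIV"
      by (simp only: norm_ell2_sq eq)
    also have "\<dots> = (norm (v - S F))\<^sup>2 + (\<Sum>i\<in>F. (cmod (vc v i))\<^sup>2)"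
      unfolding norm_ell2_sq
      by (subst infsum_add) (use vc_l2[of "v - S F"] h2[THEN has_sum_imp_summable] infsumI[OF h2] in \<open>auto simp: l2_def\<close>)
    finally show ?thesis by simp
  qed
  have "((\<lambda>F. \<Sum>i\<in>F. (cmod (vc v i))\<^sup>2) \<longlongrightarrow> (norm v)\<^sup>2) (finite_subsets_at_top UNIV)"
    using hs by (simp add: has_sum_def)
  hence "((\<lambda>F. sqrt ((norm v)\<^sup>2 - (\<Sum>i\<in>F. (cmod (vc v i))\<^sup>2))) \<longlongrightarrow> sqrt ((norm v)\<^sup>2 - (norm v)\<^sup>2))
      (finite_subsets_at_top UNIV)"
    by (intro tendsto_intros)
  hence "((\<lambda>F. sqrt ((norm v)\<^sup>2 - (\<Sum>i\<in>F. (cmod (vc v i))\<^sup>2))) \<longlongrightarrow> 0) (finite_subsets_at_top UNIV)"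
    by simp
  moreover have "\<forall>\<^sub>F F in finite_subsets_at_top UNIV.
      sqrt ((norm v)\<^sup>2 - (\<Sum>i\<in>F. (cmod (vc v i))\<^sup>2)) = norm (S F - v)"
    by (rule eventually_finite_subsets_at_top_weakI) (simp add: nsq[symmetric] norm_minus_commute)
  ultimately have "((\<lambda>F. norm (S F - v)) \<longlongrightarrow> 0) (finite_subsets_at_top UNIV)"
    by (rule Lim_transform_eventually)
  hence "(S \<longlongrightarrow> v) (finite_subsets_at_top UNIV)"
    by (simp add: tendsto_norm_zero_iff LIM_zero_iff)
  moreover have "S = sum (\<lambda>j. vc v j *\<^sub>C ket j)" by (rule ext) (simp add: S_def)
  ultimately show ?thesis by (simp add: has_sum_def)
qed



section \<open>Bounded complex-linear operators\<close>

instance ell2 :: (type) banach ..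

typedef 'x bop = "{A :: 'x ell2 \<Rightarrow>\<^sub>L 'x ell2. \<forall>c v. blinfun_apply A (c *\<^sub>C v) = c *\<^sub>C blinfun_apply A v}"
  morphisms blf Abs_bop
  by (rule exI[of _ 0]) simp

setup_lifting type_definition_bop

definition ap :: "'x bop \<Rightarrow> 'x ell2 \<Rightarrow> 'x ell2" where "ap A = blinfun_apply (blf A)"

lemma bop_eqI: "(\<And>v. ap A v = ap B v) \<Longrightarrow> A = B"
  unfolding ap_def by (metis blinfun_eqI blf_inject)

lemma blf_cscale: "blinfun_apply (blf A) (c *\<^sub>C v) = c *\<^sub>C blinfun_apply (blf A) v"
  using blf[of A] by simp

lemma ap_cscale[simp]: "ap A (c *\<^sub>C v) = c *\<^sub>C ap A v"
  by (simp add: ap_def blf_cscale)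

lemma bounded_linear_ap[simp]: "bounded_linear (ap A)"
  by (simp add: ap_def blinfun.bounded_linear_right)

lemma ap_linear[simp]:
  "ap A (x + y) = ap A x + ap A y"
  "ap A (x - y) = ap A x - ap A y"
  "ap A (- x) = - ap A x"
  "ap A (r *\<^sub>R x) = r *\<^sub>R ap A x"
  "ap A 0 = 0"
  using bounded_linear_ap[of A] by (simp_all add: linear_simps)

instantiation bop :: (type) real_normed_algebra_1
begin

lift_definition zero_bop :: "'a bop" is 0 by simp
lift_definition one_bop :: "'a bop" is id_blinfun by simp
lift_definition plus_bop :: "'a bop \<Rightarrow> 'a bop \<Rightarrow> 'a bop" is "(+)"
  by (simp add: blinfun.add_left cscale_add_right)
lift_definition minus_bop :: "'a bop \<Rightarrow> 'a bop \<Rightarrow> 'a bop" is "(-)"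
  by (simp add: blinfun.diff_left cscale_diff_right)
lift_definition uminus_bop :: "'a bop \<Rightarrow> 'a bop" is "uminus"
  by (simp add: blinfun.minus_left cscale_minus_right)
lift_definition scaleR_bop :: "real \<Rightarrow> 'a bop \<Rightarrow> 'a bop" is "scaleR"
  by (simp add: blinfun.scaleR_left cscale_scaleR)
lift_definition times_bop :: "'a bop \<Rightarrow> 'a bop \<Rightarrow> 'a bop" is "(o\<^sub>L)"
  by simp
lift_definition norm_bop :: "'a bop \<Rightarrow> real" is norm .
definition sgn_bop :: "'a bop \<Rightarrow> 'a bop" where "sgn_bop A = inverse (norm A) *\<^sub>R A"
definition dist_bop :: "'a bop \<Rightarrow> 'a bop \<Rightarrow> real" where "dist_bop A B = norm (A - B)"
definition uniformity_bop :: "('a bop \<times> 'a bop) filter" where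
  "uniformity_bop = (INF e\<in>{0<..}. principal {(x, y). dist x y < e})"
definition open_bop :: "'a bop set \<Rightarrow> bool" where
  "open_bop U = (\<forall>x\<in>U. \<forall>\<^sub>F (x', y) in uniformity. x' = x \<longrightarrow> y \<in> U)"

lemma ap_simps[simp]:
  "ap 0 v = 0"
  "ap 1 v = v"
  "ap (A + B) v = ap A v + ap B v"
  "ap (A - B) v = ap A v - ap B v"
  "ap (- A) v = - ap A v"
  "ap (r *\<^sub>R A) v = r *\<^sub>R ap A v"
  "ap (A * B) v = ap A (ap B v)"
  by (simp_all add: ap_def zero_bop.rep_eq one_bop.rep_eq plus_bop.rep_eq minus_bop.rep_eq
      uminus_bop.rep_eq scaleR_bop.rep_eq times_bop.rep_eq blinfun.bilinear_simps)

instance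
proof
  fix A B C :: "'a bop" and a b :: real
  show "A + B + C = A + (B + C)" by (rule bop_eqI) (simp add: add.assoc)
  show "A + B = B + A" by (rule bop_eqI) (simp add: add.commute)
  show "0 + A = A" by (rule bop_eqI) simp
  show "- A + A = 0" by (rule bop_eqI) simp
  show "A - B = A + - B" by (rule bop_eqI) simp
  show "a *\<^sub>R (A + B) = a *\<^sub>R A + a *\<^sub>R B" by (rule bop_eqI) (simp add: scaleR_add_right)
  show "(a + b) *\<^sub>R A = a *\<^sub>R A + b *\<^sub>R A" by (rule bop_eqI) (simp add: scaleR_add_left)
  show "a *\<^sub>R b *\<^sub>R A = (a * b) *\<^sub>R A" by (rule bop_eqI) simp
  show "1 *\<^sub>R A = A" by (rule bop_eqI) simp
  show "A * B * C = A * (B * C)" by (rule bop_eqI) simp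
  show "(A + B) * C = A * C + B * C" by (rule bop_eqI) simp
  show "A * (B + C) = A * B + A * C" by (rule bop_eqI) simp
  show "1 * A = A" by (rule bop_eqI) simp
  show "A * 1 = A" by (rule bop_eqI) simp
  show "a *\<^sub>R A * B = a *\<^sub>R (A * B)" by (rule bop_eqI) simp
  show "A * a *\<^sub>R B = a *\<^sub>R (A * B)" by (rule bop_eqI) simp
  show "(0::'a bop) \<noteq> 1"
  proof
    assume "(0::'a bop) = 1"
    hence "ap (0::'a bop) (ket undefined) = ap 1 (ket undefined)" by simp
    hence "ket (undefined::'a) = 0" by simp
    thus False using norm_ket[of "undefined::'a"] by simp
  qed
  show "sgn A = inverse (norm A) *\<^sub>R A" by (simp add: sgn_bop_def)
  show "dist A B = norm (A - B)" by (simp add: dist_bop_def)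
  show "norm A = 0 \<longleftrightarrow> A = 0"
    by (metis norm_bop.rep_eq norm_eq_zero zero_bop.rep_eq blf_inject)
  show "norm (A + B) \<le> norm A + norm B"
    by (simp add: norm_bop.rep_eq plus_bop.rep_eq norm_triangle_ineq)
  show "norm (a *\<^sub>R A) = \<bar>a\<bar> * norm A" by (simp add: norm_bop.rep_eq scaleR_bop.rep_eq)
  show "norm (A * B) \<le> norm A * norm B"
    by (simp add: norm_bop.rep_eq times_bop.rep_eq norm_blinfun_compose)
  show "norm (1::'a bop) = 1"
    unfolding norm_bop.rep_eq one_bop.rep_eq
    by (rule norm_blinfun_eqI[where x="ket undefined"]) auto
  show "uniformity = (INF e\<in>{0<..}. principal {(x, y). dist (x::'a bop) y < e})"
    by (simp add: uniformity_bop_def)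
  show "open U = (\<forall>x\<in>U. \<forall>\<^sub>F (x', y) in uniformity. x' = x \<longrightarrow> y \<in> U)" for U :: "'a bop set"
    by (simp add: open_bop_def)
qed
end

lemma norm_ap: "norm (ap A v) \<le> norm A * norm v"
  unfolding ap_def norm_bop.rep_eq by (rule norm_blinfun)

lemma norm_bop_bound: "0 \<le> b \<Longrightarrow> (\<And>v. norm (ap A v) \<le> b * norm v) \<Longrightarrow> norm A \<le> b"
  unfolding ap_def norm_bop.rep_eq by (rule norm_blinfun_bound)

lemma norm_bop_blf: "norm A = norm (blf A)"
  by (rule norm_bop.rep_eq)

lemma blf_minus: "blf (A - B) = blf A - blf B"
  by (rule minus_bop.rep_eq)

lemma bop_complete:
  fixes X :: "nat \<Rightarrow> 'a bop" assumes C: "Cauchy X" shows "convergent X"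
proof -
  have d: "dist (blf (X m)) (blf (X n)) = dist (X m) (X n)" for m n
    by (simp only: dist_norm dist_bop_def norm_bop_blf blf_minus)
  have "Cauchy (\<lambda>n. blf (X n))"
  proof (rule metric_CauchyI)
    fix e :: real assume "e > 0"
    then obtain M where "\<forall>m\<ge>M. \<forall>n\<ge>M. dist (X m) (X n) < e" using C metric_CauchyD by blast
    thus "\<exists>M. \<forall>m\<ge>M. \<forall>n\<ge>M. dist (blf (X m)) (blf (X n)) < e" by (intro exI[of _ M]) (simp only: d)
  qed
  then obtain L where L: "(\<lambda>n. blf (X n)) \<longlonglongrightarrow> L"
    using Cauchy_convergent unfolding convergent_def by blast
  have Lc: "blinfun_apply L (c *\<^sub>C v) = c *\<^sub>C blinfun_apply L v" for c v
  proof -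
    have 1: "(\<lambda>n. blinfun_apply (blf (X n)) (c *\<^sub>C v)) \<longlonglongrightarrow> blinfun_apply L (c *\<^sub>C v)"
      using L tendsto_const by (rule blinfun.tendsto)
    have "(\<lambda>n. blinfun_apply (blf (X n)) v) \<longlonglongrightarrow> blinfun_apply L v"
      using L tendsto_const by (rule blinfun.tendsto)
    hence "(\<lambda>n. c *\<^sub>C blinfun_apply (blf (X n)) v) \<longlonglongrightarrow> c *\<^sub>C blinfun_apply L v"
      by (rule bounded_linear.tendsto[OF bounded_linear_cscale])
    hence 2: "(\<lambda>n. blinfun_apply (blf (X n)) (c *\<^sub>C v)) \<longlonglongrightarrow> c *\<^sub>C blinfun_apply L v"
      by (simp only: blf_cscale)
    from 1 2 show ?thesis by (rule LIMSEQ_unique)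
  qed
  have Lmem: "L \<in> {A. \<forall>c v. blinfun_apply A (c *\<^sub>C v) = c *\<^sub>C blinfun_apply A v}"
    using Lc by simp
  have "(\<lambda>n. blf (X n) - L) \<longlonglongrightarrow> 0"
    using L by (rule LIM_zero)
  hence "(\<lambda>n. norm (blf (X n) - L)) \<longlonglongrightarrow> 0"
    by (rule tendsto_norm_zero)
  moreover have "(\<lambda>n. norm (blf (X n) - L)) = (\<lambda>n. dist (X n) (Abs_bop L))"
    by (simp only: dist_bop_def norm_bop_blf blf_minus Abs_bop_inverse[OF Lmem])
  ultimately have "(\<lambda>n. dist (X n) (Abs_bop L)) \<longlonglongrightarrow> 0" by (simp only:)
  hence "X \<longlonglongrightarrow> Abs_bop L" by (rule tendsto_dist_iff[THEN iffD2])
  thus "convergent X" by (rule convergentI)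
qed

instance bop :: (type) banach
  by standard (rule bop_complete)



section \<open>Matrices versus operators\<close>

lemma l2norm_vc: "l2norm (vc v) = norm v"
  by (simp add: l2norm_def norm_ell2_sq[symmetric])

lemma vc_Abs: "v \<in> l2 \<Longrightarrow> vc (Abs_ell2 v) = v"
  by (rule Abs_ell2_inverse) simp

lemma ap_expansion: "((\<lambda>j. vc v j *\<^sub>C ap A (ket j)) has_sum ap A v) UNIV"
  using has_sum_bounded_linear[OF bounded_linear_ap ell2_expansion, of A v] by simp

lemma coord_expansion: "((\<lambda>j. vc v j * vc (ap A (ket j)) i) has_sum vc (ap A v) i) UNIV"
  using has_sum_bounded_linear[OF bounded_linear_vc[of i] ap_expansion[of v A]] by simp

lemma cinner_expansion: "((\<lambda>j. vc v j * cinner (ap A (ket j)) w) has_sum cinner (ap A v) w) UNIV"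
  using has_sum_bounded_linear[OF bounded_linear_cinner_left[of w] ap_expansion[of v A]] by simp

definition matof :: "'x bop \<Rightarrow> 'x mat" where "matof A = (\<lambda>i j. vc (ap A (ket j)) i)"

lemma matof_row_has_sum: "((\<lambda>j. matof A i j * vc v j) has_sum vc (ap A v) i) UNIV"
  using coord_expansion[of v A i] by (simp add: matof_def mult.commute)

lemma mat_apply_matof: "mat_apply (matof A) (vc v) = vc (ap A v)"
  using matof_row_has_sum[of A] by (auto simp: mat_apply_def intro!: ext infsumI)

lemma bounded_matof: "bounded_mat (matof A)"
  unfolding bounded_mat_def
proof (intro exI[of _ "norm A"] ballI conjI allI)
  fix v :: "'a \<Rightarrow> complex" and i assume v: "v \<in> l2"
  define x where "x = Abs_ell2 v"
  have vx: "v = vc x" by (simp add: x_def vc_Abs v)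
  show "(\<lambda>j. matof A i j * v j) summable_on UNIV"
    unfolding vx using matof_row_has_sum by (rule has_sum_imp_summable)
  show "mat_apply (matof A) v \<in> l2" unfolding vx mat_apply_matof by simp
  show "l2norm (mat_apply (matof A) v) \<le> norm A * l2norm v"
    unfolding vx mat_apply_matof l2norm_vc by (rule norm_ap)
qed

definition mop :: "'x mat \<Rightarrow> 'x ell2 \<Rightarrow> 'x ell2" where "mop t v = Abs_ell2 (mat_apply t (vc v))"

lemma bounded_matD:
  assumes "bounded_mat t"
  obtains C where "\<And>v. v \<in> l2 \<Longrightarrow> (\<forall>i. (\<lambda>j. t i j * v j) summable_on UNIV)"
    "\<And>v. v \<in> l2 \<Longrightarrow> mat_apply t v \<in> l2"
    "\<And>v. v \<in> l2 \<Longrightarrow> l2norm (mat_apply t v) \<le> C * l2norm v"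
  using assms unfolding bounded_mat_def by blast

lemma vc_mop: "bounded_mat t \<Longrightarrow> vc (mop t v) = mat_apply t (vc v)"
  unfolding mop_def by (rule vc_Abs) (erule bounded_matD, simp)

lemma mop_props:
  assumes t: "bounded_mat t"
  shows "bounded_linear (mop t)" "mop t (c *\<^sub>C v) = c *\<^sub>C mop t v"
proof -
  obtain C where s: "\<And>v i. v \<in> l2 \<Longrightarrow> (\<lambda>j. t i j * v j) summable_on UNIV"
    and b: "\<And>v. v \<in> l2 \<Longrightarrow> l2norm (mat_apply t v) \<le> C * l2norm v"
    using t by (rule bounded_matD) blast
  have add: "mop t (x + y) = mop t x + mop t y" for x y
    unfolding vc_inject'
    by (simp add: vc_mop[OF t] mat_apply_def distrib_left infsum_add s)
  have cs: "mop t (c *\<^sub>C v) = c *\<^sub>C mop t v" for c v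
    unfolding vc_inject'
    by (simp add: vc_mop[OF t] mat_apply_def mult.left_commute infsum_cmult_right')
  show "mop t (c *\<^sub>C v) = c *\<^sub>C mop t v" by (rule cs)
  show "bounded_linear (mop t)"
  proof (rule bounded_linear_intro[of _ C])
    show "mop t (x + y) = mop t x + mop t y" for x y by (rule add)
    show "mop t (r *\<^sub>R x) = r *\<^sub>R mop t x" for r x by (simp add: scaleR_cscale cs)
    show "norm (mop t x) \<le> norm x * C" for x
      using b[of "vc x"] by (simp add: l2norm_vc[symmetric] vc_mop[OF t] mult.commute)
  qed
qed

definition opm :: "'x mat \<Rightarrow> 'x bop" where "opm t = Abs_bop (Blinfun (mop t))"

lemma ap_opm: assumes t: "bounded_mat t" shows "ap (opm t) = mop t"
proof -
  have "Blinfun (mop t) \<in> {A. \<forall>c v. blinfun_apply A (c *\<^sub>C v) = c *\<^sub>C blinfun_apply A v}"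
    using mop_props[OF t] by (simp add: bounded_linear_Blinfun_apply)
  thus ?thesis unfolding ap_def opm_def
    by (simp add: Abs_bop_inverse bounded_linear_Blinfun_apply mop_props[OF t])
qed

lemma vc_ap_opm: "bounded_mat t \<Longrightarrow> vc (ap (opm t) v) = mat_apply t (vc v)"
  by (simp add: ap_opm vc_mop)

lemma mat_apply_ket: "mat_apply t (vc (ket k)) = (\<lambda>i. t i k)"
proof
  fix i
  have "((\<lambda>j. t i j * vc (ket k) j) has_sum (\<Sum>j\<in>{k}. t i j * vc (ket k) j)) UNIV"
    by (rule has_sum_finite_support) (auto simp: vc_ket)
  thus "mat_apply t (vc (ket k)) i = t i k" by (simp add: mat_apply_def vc_ket infsumI)
qed

lemma matof_opm: "bounded_mat t \<Longrightarrow> matof (opm t) = t"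
  by (simp add: matof_def vc_ap_opm mat_apply_ket)

lemma opm_matof[simp]: "opm (matof A) = A"
  by (rule bop_eqI) (simp add: vc_inject' vc_ap_opm bounded_matof mat_apply_matof)

lemma matof_inject: "matof A = matof B \<longleftrightarrow> A = B"
  by (metis opm_matof)

lemma norm_bop_Sup: "norm A = Sup {norm (ap A x) | x. norm x \<le> 1}"
proof -
  let ?S = "{norm (ap A x) | x. norm x \<le> 1}"
  have ne: "?S \<noteq> {}" by (auto intro!: exI[of _ 0])
  have le: "norm (ap A x) \<le> norm A" if "norm x \<le> 1" for x
    using norm_ap[of A x] mult_left_le[OF that norm_ge_zero[of A]] by linarith
  have bdd: "bdd_above ?S"
    by (rule bdd_aboveI[of _ "norm A"]) (auto intro: le)
  have "0 \<in> ?S" by (auto intro!: exI[of _ 0])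
  hence S0: "0 \<le> Sup ?S" using bdd by (rule cSup_upper)
  show ?thesis
  proof (rule antisym)
    show "norm A \<le> Sup ?S"
    proof (rule norm_bop_bound[OF S0])
      fix v :: "'a ell2"
      show "norm (ap A v) \<le> Sup ?S * norm v"
      proof (cases "v = 0")
        case False
        define x where "x = (1 / norm v) *\<^sub>R v"
        have "norm x \<le> 1" using False by (simp add: x_def)
        hence "norm (ap A x) \<le> Sup ?S" using bdd by (intro cSup_upper) auto
        moreover have "norm (ap A x) = norm (ap A v) / norm v" using False by (simp add: x_def)
        ultimately show ?thesis using False by (simp add: divide_le_eq)
      qed simp
    qed
    show "Sup ?S \<le> norm A"
    proof (rule cSup_least[OF ne])
      fix y assume "y \<in> ?S"
      then obtain x where "y = norm (ap A x)" "norm x \<le> 1" by auto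
      thus "y \<le> norm A" using norm_ap[of A x]
        by (metis mult_left_le norm_ge_zero order_trans)
    qed
  qed
qed

lemma opnorm_opm: assumes t: "bounded_mat t" shows "opnorm t = ennreal (norm (opm t))"
proof -
  have "{l2norm (mat_apply t v) | v. v \<in> l2 \<and> l2norm v \<le> 1} = {norm (ap (opm t) x) | x. norm x \<le> 1}"
  proof safe
    fix v :: "'a \<Rightarrow> complex" assume "v \<in> l2" "l2norm v \<le> 1"
    thus "\<exists>x. l2norm (mat_apply t v) = norm (ap (opm t) x) \<and> norm x \<le> 1"
      by (intro exI[of _ "Abs_ell2 v"])
         (simp add: l2norm_vc[symmetric] vc_ap_opm[OF t] vc_Abs)
  next
    fix x :: "'a ell2" assume "norm x \<le> 1"
    thus "\<exists>v. norm (ap (opm t) x) = l2norm (mat_apply t v) \<and> v \<in> l2 \<and> l2norm v \<le> 1"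
      by (intro exI[of _ "vc x"]) (simp add: l2norm_vc[symmetric] vc_ap_opm[OF t])
  qed
  thus ?thesis using t by (simp add: opnorm_def norm_bop_Sup[symmetric])
qed

lemma opnorm_matof: "opnorm (matof A) = ennreal (norm A)"
  using opnorm_opm[OF bounded_matof] by simp

lemma mat_mult_opm:
  assumes s: "bounded_mat s" and t: "bounded_mat t"
  shows "mat_mult s t = matof (opm s * opm t)"
  by (simp add: matof_def mat_mult_def vc_ap_opm[OF s] vc_ap_opm[OF t] mat_apply_ket
      mat_apply_def[of s])

lemma mat_mult_matof: "mat_mult (matof A) (matof B) = matof (A * B)"
  by (simp add: mat_mult_opm bounded_matof)

section \<open>Adjoints\<close>

lemma cnj_mult_self: "cnj z * z = (complex_of_real (cmod z))\<^sup>2"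
  by (metis complex_norm_square mult.commute of_real_power)

lemma sum_ket_vc:
  assumes "finite F"
  shows "vc (\<Sum>k\<in>F. u k *\<^sub>C ket k) i = (if i \<in> F then u i else 0)"
  using assms by (simp add: vc_sum vc_ket if_distrib sum.delta cong: if_cong)

lemma norm_sum_ket_sq:
  assumes "finite F"
  shows "(norm (\<Sum>k\<in>F. u k *\<^sub>C ket k))\<^sup>2 = (\<Sum>k\<in>F. (cmod (u k))\<^sup>2)"
proof -
  have "((\<lambda>i. (cmod (vc (\<Sum>k\<in>F. u k *\<^sub>C ket k) i))\<^sup>2) has_sum
      (\<Sum>i\<in>F. (cmod (vc (\<Sum>k\<in>F. u k *\<^sub>C ket k) i))\<^sup>2)) UNIV"
    by (rule has_sum_finite_support[OF assms]) (simp add: sum_ket_vc[OF assms])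
  thus ?thesis by (simp add: norm_ell2_sq infsumI sum_ket_vc[OF assms])
qed

lemma adjoint_matof_l2:
  fixes A :: "'x bop" and w :: "'x ell2"
  defines "u \<equiv> (\<lambda>k. cinner w (ap A (ket k)))"
  shows "u \<in> l2" "l2norm u \<le> norm A * norm w"
proof -
  have bnd: "(\<Sum>k\<in>F. (cmod (u k))\<^sup>2) \<le> (norm A * norm w)\<^sup>2" if F: "finite F" for F
  proof -
    define x where "x = (\<Sum>k\<in>F. u k *\<^sub>C ket k)"
    define S where "S = (\<Sum>k\<in>F. (cmod (u k))\<^sup>2)"
    have S0: "S \<ge> 0" by (simp add: S_def sum_nonneg)
    have nx: "norm x = sqrt S" using norm_sum_ket_sq[OF F, of u] by (simp add: x_def S_def real_sqrt_unique)
    have "cinner (ap A x) w = (\<Sum>k\<in>F. u k * cinner (ap A (ket k)) w)"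
      by (simp add: x_def linear_sum[OF bounded_linear.linear[OF bounded_linear_ap]]
          cinner_sum_left)
    also have "\<dots> = (\<Sum>k\<in>F. complex_of_real ((cmod (u k))\<^sup>2))"
      by (rule sum.cong) (simp_all add: u_def cnj_mult_self cinner_commute[of w])
    finally have "cinner (ap A x) w = complex_of_real S" by (simp add: S_def)
    hence "S = cmod (cinner (ap A x) w)" using S0 by simp
    also have "\<dots> \<le> norm (ap A x) * norm w" by (rule cinner_cauchy_schwarz)
    also have "\<dots> \<le> norm A * norm x * norm w" by (intro mult_right_mono norm_ap) simp
    finally have "S \<le> (norm A * norm w) * sqrt S" by (simp add: nx mult_ac)
    hence ss: "sqrt S * sqrt S \<le> (norm A * norm w) * sqrt S" using S0 by simp
    have "sqrt S \<le> norm A * norm w"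
    proof (cases "sqrt S = 0")
      case False
      hence "sqrt S > 0" using S0 by simp
      thus ?thesis using ss mult_le_cancel_right_pos[of "sqrt S" "sqrt S" "norm A * norm w"] by blast
    qed simp
    hence "(sqrt S)\<^sup>2 \<le> (norm A * norm w)\<^sup>2" by (intro power_mono) (auto simp: S0)
    thus ?thesis using S0 by (simp add: S_def)
  qed
  show "u \<in> l2" using bnd by (rule l2_of_bounded)
  have "infsum (\<lambda>i. (cmod (u i))\<^sup>2) UNIV \<le> (norm A * norm w)\<^sup>2" using bnd by (rule l2_of_bounded)
  from real_sqrt_le_mono[OF this] show "l2norm u \<le> norm A * norm w" unfolding l2norm_def by simp
qed

lemma mat_apply_adjoint_matof:
  "mat_apply (adjoint (matof A)) (vc w) = (\<lambda>k. cinner w (ap A (ket k)))"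
  by (simp add: mat_apply_def adjoint_def matof_def cinner.rep_eq l2inner_def mult.commute)

lemma bounded_adjoint_matof: "bounded_mat (adjoint (matof A))"
  unfolding bounded_mat_def
proof (intro exI[of _ "norm A"] ballI conjI allI)
  fix v :: "'a \<Rightarrow> complex" and k assume v: "v \<in> l2"
  define w where "w = Abs_ell2 v"
  have vw: "v = vc w" by (simp add: w_def vc_Abs v)
  show "(\<lambda>i. adjoint (matof A) k i * v i) summable_on UNIV"
    unfolding adjoint_def using l2_prod_summable[OF l2_cnj[OF vc_l2[of "ap A (ket k)"]] v]
    by (simp add: matof_def)
  show "mat_apply (adjoint (matof A)) v \<in> l2"
    unfolding vw mat_apply_adjoint_matof by (rule adjoint_matof_l2)
  show "l2norm (mat_apply (adjoint (matof A)) v) \<le> norm A * l2norm v"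
    unfolding vw mat_apply_adjoint_matof l2norm_vc by (rule adjoint_matof_l2)
qed

definition adj :: "'x bop \<Rightarrow> 'x bop" where "adj A = opm (adjoint (matof A))"

lemma vc_ap_adj: "vc (ap (adj A) w) = (\<lambda>k. cinner w (ap A (ket k)))"
  by (simp add: adj_def vc_ap_opm bounded_adjoint_matof mat_apply_adjoint_matof)

lemma adj_cinner: "cinner (ap A v) w = cinner v (ap (adj A) w)"
proof -
  have "cinner v (ap (adj A) w) = infsum (\<lambda>k. vc v k * cnj (cinner w (ap A (ket k)))) UNIV"
    by (simp only: cinner.rep_eq l2inner_def vc_ap_adj)
  also have "\<dots> = infsum (\<lambda>k. vc v k * cinner (ap A (ket k)) w) UNIV"
    by (simp only: cinner_commute[of w] complex_cnj_cnj)
  also have "\<dots> = cinner (ap A v) w" using cinner_expansion by (rule infsumI)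
  finally show ?thesis by simp
qed

lemma adj_cinner': "cinner v (ap A w) = cinner (ap (adj A) v) w"
  by (metis adj_cinner cinner_commute)

lemma matof_adj: "matof (adj A) = adjoint (matof A)"
  by (simp add: adj_def matof_opm bounded_adjoint_matof)

lemma ell2_eqI_cinner': "(\<And>z. cinner z x = cinner z y) \<Longrightarrow> x = y"
  by (rule ell2_eqI_cinner) (metis cinner_commute)

lemma adj_unique: "(\<And>v w. cinner (ap A v) w = cinner v (ap B w)) \<Longrightarrow> adj A = B"
  by (rule bop_eqI, rule ell2_eqI_cinner') (metis adj_cinner)

lemma adj_adj[simp]: "adj (adj A) = A"
  by (rule adj_unique) (metis adj_cinner cinner_commute)

lemma adj_mult: "adj (A * B) = adj B * adj A"
  by (rule adj_unique) (simp add: adj_cinner)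

lemma adj_add: "adj (A + B) = adj A + adj B"
  by (rule adj_unique) (simp add: cinner_add_left cinner_add_right adj_cinner)

lemma adj_diff: "adj (A - B) = adj A - adj B"
  by (rule adj_unique) (simp add: cinner_diff_left cinner_diff_right adj_cinner)

lemma adj_scaleR: "adj (r *\<^sub>R A) = r *\<^sub>R adj A"
  by (rule adj_unique) (simp add: adj_cinner)

lemma adj_one[simp]: "adj 1 = 1"
  by (rule adj_unique) simp

lemma adj_zero[simp]: "adj 0 = 0"
  by (rule adj_unique) simp

lemma adj_power: "adj (A ^ n) = (adj A) ^ n"
  by (induction n) (simp_all add: adj_mult power_commutes)



section \<open>Positivity\<close>

lemma cmod_cinner_self: "cmod (cinner x x) = (norm x)\<^sup>2"
  by (simp only: cinner_self norm_of_real) simp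

lemma mult_cnj_self: "w * cnj w = (complex_of_real (cmod w))\<^sup>2"
  by (metis complex_norm_square of_real_power)

definition qf :: "'x bop \<Rightarrow> 'x ell2 \<Rightarrow> real" where "qf A v = Re (cinner (ap A v) v)"

definition pos :: "'x bop \<Rightarrow> bool" where
  "pos A \<longleftrightarrow> (\<forall>v. cinner (ap A v) v \<in> \<real> \<and> 0 \<le> Re (cinner (ap A v) v))"

lemma pos_qf: "pos A \<Longrightarrow> cinner (ap A v) v = complex_of_real (qf A v)"
  unfolding pos_def qf_def by (metis Reals_cases Re_complex_of_real)

lemma pos_qf_nonneg: "pos A \<Longrightarrow> 0 \<le> qf A v"
  unfolding pos_def qf_def by blast

lemma quad_zero:
  assumes h: "\<And>x. cinner (ap B x) x = 0"
  shows "B = 0"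
proof (rule bop_eqI)
  fix x
  have e1: "cinner (ap B x) y + cinner (ap B y) x = 0" for y
    using h[of "x + y"] h[of x] h[of y] by (simp add: cinner_add_left cinner_add_right algebra_simps)
  have "cinner (ap B x) y = 0" for y
  proof -
    have "cinner (ap B x) (\<i> *\<^sub>C y) + cinner (ap B (\<i> *\<^sub>C y)) x = 0" by (rule e1)
    hence "- \<i> * cinner (ap B x) y + \<i> * cinner (ap B y) x = 0" by simp
    hence "cinner (ap B y) x = cinner (ap B x) y" by (simp add: algebra_simps)
    with e1[of y] show ?thesis by simp
  qed
  from this[of "ap B x"] show "ap B x = ap 0 x" by (simp add: cinner_eq_zero_iff)
qed

lemma pos_herm: assumes "pos A" shows "adj A = A"
proof -
  have "cinner (ap (A - adj A) x) x = 0" for x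
  proof -
    have "cinner (ap (adj A) x) x = cinner x (ap A x)" by (simp add: adj_cinner')
    also have "\<dots> = cnj (cinner (ap A x) x)" by (rule cinner_commute)
    also have "\<dots> = cinner (ap A x) x" using pos_qf[OF assms] by simp
    finally show ?thesis by (simp add: cinner_diff_left)
  qed
  hence "A - adj A = 0" by (rule quad_zero)
  thus ?thesis by simp
qed

lemma herm_cinner: "adj A = A \<Longrightarrow> cinner (ap A x) y = cinner x (ap A y)"
  by (metis adj_cinner)

lemma discr:
  fixes a b m :: real
  assumes h: "\<And>t. 0 \<le> a + 2 * t * m + t\<^sup>2 * b" and b: "b \<ge> 0" and m: "m \<ge> 0"
  shows "m\<^sup>2 \<le> a * b"
proof (cases "b = 0")
  case True
  have "m = 0"
  proof (rule ccontr)
    assume "m \<noteq> 0" hence "m > 0" using m by simp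
    have "0 \<le> a + 2 * (- (a + 1) / (2 * m)) * m" using h[of "- (a + 1) / (2 * m)"] True by simp
    also have "\<dots> = -1" using \<open>m > 0\<close> by (simp add: field_simps)
    finally show False by simp
  qed
  thus ?thesis using True by simp
next
  case False
  hence bp: "b > 0" using b by simp
  have "0 \<le> a + 2 * (- m / b) * m + (- m / b)\<^sup>2 * b" by (rule h)
  also have "\<dots> = a - m\<^sup>2 / b" using bp by (simp add: field_simps power2_eq_square)
  finally have "m\<^sup>2 / b \<le> a" by simp
  thus ?thesis using bp by (simp add: divide_le_eq mult.commute)
qed

lemma pos_cs:
  assumes A: "pos A"
  shows "(cmod (cinner (ap A x) y))\<^sup>2 \<le> qf A x * qf A y"
proof (cases "cinner (ap A x) y = 0")
  case True thus ?thesis using pos_qf_nonneg[OF A] by simp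
next
  case False
  define w where "w = cinner (ap A x) y"
  define c where "c = w / complex_of_real (cmod w)"
  define u where "u = c *\<^sub>C y"
  have w0: "cmod w > 0" using False w_def by simp
  have cc: "cnj c * c = 1" using w0 by (simp add: c_def cnj_mult_self mult_cnj_self field_simps power2_eq_square)
  have h: "adj A = A" by (rule pos_herm[OF A])
  have xu: "cinner (ap A x) u = complex_of_real (cmod w)"
    using w0 by (simp add: u_def c_def w_def[symmetric] cnj_mult_self mult_cnj_self field_simps power2_eq_square)
  have ux: "cinner (ap A u) x = complex_of_real (cmod w)"
    by (metis cinner_commute herm_cinner[OF h] xu complex_cnj_complex_of_real)
  have "cinner (ap A u) u = (cnj c * c) * cinner (ap A y) y" by (simp add: u_def mult_ac)
  hence uu: "qf A u = qf A y" unfolding qf_def using cc by simp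
  have "0 \<le> qf A x + 2 * t * cmod w + t\<^sup>2 * qf A y" for t
  proof -
    have "0 \<le> qf A (x + t *\<^sub>R u)" by (rule pos_qf_nonneg[OF A])
    also have "\<dots> = qf A x + 2 * t * cmod w + t\<^sup>2 * qf A u"
      unfolding qf_def using xu ux
      by (simp add: cinner_add_left cinner_add_right power2_eq_square algebra_simps)
    finally show ?thesis using uu by simp
  qed
  hence "(cmod w)\<^sup>2 \<le> qf A x * qf A y"
    by (rule discr) (use pos_qf_nonneg[OF A] in auto)
  thus ?thesis by (simp add: w_def)
qed

lemma qf_le_norm: "qf A x \<le> norm A * (norm x)\<^sup>2"
proof -
  have "qf A x \<le> cmod (cinner (ap A x) x)" unfolding qf_def by (rule complex_Re_le_cmod)
  also have "\<dots> \<le> norm (ap A x) * norm x" by (rule cinner_cauchy_schwarz)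
  also have "\<dots> \<le> norm A * norm x * norm x" by (intro mult_right_mono norm_ap) simp
  finally show ?thesis by (simp add: power2_eq_square mult.assoc)
qed

lemma pos_norm_sq:
  assumes A: "pos A"
  shows "(norm (ap A x))\<^sup>2 \<le> norm A * qf A x"
proof (cases "ap A x = 0")
  case False
  have "((norm (ap A x))\<^sup>2)\<^sup>2 = (cmod (cinner (ap A x) (ap A x)))\<^sup>2" by (simp add: cmod_cinner_self)
  also have "\<dots> \<le> qf A x * qf A (ap A x)" by (rule pos_cs[OF A])
  also have "\<dots> \<le> qf A x * (norm A * (norm (ap A x))\<^sup>2)"
    by (intro mult_left_mono qf_le_norm pos_qf_nonneg[OF A])
  finally have le: "((norm (ap A x))\<^sup>2)\<^sup>2 \<le> qf A x * (norm A * (norm (ap A x))\<^sup>2)" .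
  define n where "n = (norm (ap A x))\<^sup>2"
  have "n * n \<le> (norm A * qf A x) * n" using le unfolding n_def[symmetric]
    by (simp only: power2_eq_square mult_ac)
  moreover have "n > 0" using False by (simp add: n_def)
  ultimately show ?thesis using mult_le_cancel_right_pos[of n n "norm A * qf A x"] by (simp add: n_def)
qed (simp add: pos_qf_nonneg[OF A])

lemma pos_qf_zero: "pos A \<Longrightarrow> qf A x = 0 \<Longrightarrow> ap A x = 0"
  using pos_norm_sq[of A x] by simp

lemma norm_adj_le: "norm (adj A) \<le> norm A"
proof (rule norm_bop_bound)
  fix w
  have "(norm (ap (adj A) w))\<^sup>2 = cmod (cinner (ap (adj A) w) (ap (adj A) w))" by (simp add: cmod_cinner_self)
  also have "\<dots> = cmod (cinner w (ap A (ap (adj A) w)))" by (simp add: adj_cinner')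
  also have "\<dots> \<le> norm w * norm (ap A (ap (adj A) w))" by (rule cinner_cauchy_schwarz)
  also have "\<dots> \<le> norm w * (norm A * norm (ap (adj A) w))" by (intro mult_left_mono norm_ap) simp
  finally have "norm (ap (adj A) w) * norm (ap (adj A) w) \<le> (norm A * norm w) * norm (ap (adj A) w)"
    by (simp add: power2_eq_square mult_ac)
  thus "norm (ap (adj A) w) \<le> norm A * norm w"
    by (cases "norm (ap (adj A) w) = 0") (auto simp: mult_le_cancel_right)
qed simp

lemma bounded_linear_adj: "bounded_linear adj"
  by (rule bounded_linear_intro[of _ 1]) (auto simp: adj_add adj_scaleR norm_adj_le)

lemma tendsto_adj: "(X \<longlongrightarrow> L) F \<Longrightarrow> ((\<lambda>n. adj (X n)) \<longlongrightarrow> adj L) F"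
  by (rule bounded_linear.tendsto[OF bounded_linear_adj])

lemma pos_adj_mult: "pos (adj T * T)"
  unfolding pos_def
proof
  fix v
  have "cinner (ap (adj T * T) v) v = complex_of_real ((norm (ap T v))\<^sup>2)"
    by (simp add: adj_cinner'[symmetric] cinner_self)
  thus "cinner (ap (adj T * T) v) v \<in> \<real> \<and> 0 \<le> Re (cinner (ap (adj T * T) v) v)" by simp
qed



section \<open>Square roots\<close>

fun Yseq :: "'x bop \<Rightarrow> nat \<Rightarrow> 'x bop" where
  "Yseq B 0 = 0"
| "Yseq B (Suc n) = (1/2) *\<^sub>R (B + Yseq B n * Yseq B n)"

fun yseq :: "real \<Rightarrow> nat \<Rightarrow> real" where
  "yseq b 0 = 0"
| "yseq b (Suc n) = (b + (yseq b n)\<^sup>2) / 2"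

lemma yseq_props:
  assumes "0 \<le> b" "b \<le> 1"
  shows "0 \<le> yseq b n \<and> yseq b n \<le> 1 \<and> yseq b n \<le> yseq b (Suc n)"
proof (induction n)
  case 0 thus ?case using assms by simp
next
  case (Suc n)
  have y0: "0 \<le> yseq b n" "yseq b n \<le> 1" "yseq b n \<le> yseq b (Suc n)" using Suc by auto
  have "(yseq b n)\<^sup>2 \<le> 1" using y0 by (simp add: power_le_one)
  hence y1: "0 \<le> yseq b (Suc n)" "yseq b (Suc n) \<le> 1" using assms by auto
  have "(yseq b n)\<^sup>2 \<le> (yseq b (Suc n))\<^sup>2" using y0 by (intro power_mono) auto
  hence "yseq b (Suc n) \<le> yseq b (Suc (Suc n))" by (simp only: yseq.simps(2)[of b "Suc n"] yseq.simps(2)[of b n]) simp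
  thus ?case using y1 by blast
qed

lemma yseq_nonneg: "0 \<le> b \<Longrightarrow> 0 \<le> yseq b n"
  by (induction n) auto

lemma yseq_mono: "0 \<le> b \<Longrightarrow> b \<le> 1 \<Longrightarrow> incseq (yseq b)"
  using yseq_props by (intro incseq_SucI) blast

lemma yseq_Cauchy: "0 \<le> b \<Longrightarrow> b \<le> 1 \<Longrightarrow> Cauchy (yseq b)"
proof -
  assume b: "0 \<le> b" "b \<le> 1"
  have "bdd_above (range (yseq b))" using yseq_props[OF b] by (intro bdd_aboveI2[where M=1]) blast
  from LIMSEQ_incseq_SUP[OF this yseq_mono[OF b]] show ?thesis
    by (intro convergent_Cauchy convergentI)
qed

lemma Yseq_intertwine:
  assumes "T * B1 = B2 * T"
  shows "T * Yseq B1 n = Yseq B2 n * T"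
proof (induction n)
  case (Suc n)
  have "T * Yseq B1 (Suc n) = (1/2) *\<^sub>R (T * B1 + (T * Yseq B1 n) * Yseq B1 n)"
    by (simp add: distrib_left mult.assoc)
  also have "\<dots> = (1/2) *\<^sub>R (B2 * T + Yseq B2 n * (T * Yseq B1 n))"
    using Suc assms by (simp add: mult.assoc)
  also have "\<dots> = Yseq B2 (Suc n) * T"
    using Suc by (simp add: distrib_right mult.assoc)
  finally show ?case .
qed simp

lemma Yseq_commute: "C * B = B * C \<Longrightarrow> C * Yseq B n = Yseq B n * C"
  by (rule Yseq_intertwine)

lemma Yseq_commute_Suc: "Yseq B n * Yseq B (Suc n) = Yseq B (Suc n) * Yseq B n"
proof -
  have c: "Yseq B n * B = B * Yseq B n"
    using Yseq_commute[of B B n] by simp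
  show ?thesis by (simp add: distrib_left distrib_right c mult.assoc)
qed

lemma Yseq_norm:
  assumes "norm B \<le> b"
  shows "norm (Yseq B n) \<le> yseq b n"
proof (induction n)
  case (Suc n)
  have "norm (Yseq B (Suc n)) = (1/2) * norm (B + Yseq B n * Yseq B n)" by simp
  also have "\<dots> \<le> (1/2) * (norm B + norm (Yseq B n) * norm (Yseq B n))"
    by (intro mult_left_mono order_trans[OF norm_triangle_ineq] add_left_mono norm_mult_ineq) auto
  also have "\<dots> \<le> (1/2) * (b + yseq b n * yseq b n)"
    using Suc assms yseq_nonneg[of b n] order_trans[OF norm_ge_zero assms]
    by (intro mult_left_mono add_mono mult_mono) auto
  finally show ?case by (simp add: power2_eq_square)
qed simp

lemma Yseq_diff:
  assumes "norm B \<le> b" "0 \<le> b" "b \<le> 1"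
  shows "norm (Yseq B (Suc n) - Yseq B n) \<le> yseq b (Suc n) - yseq b n"
proof (induction n)
  case 0 thus ?case using Yseq_norm[OF assms(1), of 1] by simp
next
  case (Suc n)
  let ?Y1 = "Yseq B (Suc n)" and ?Y0 = "Yseq B n"
  have "Yseq B (Suc (Suc n)) - ?Y1 = (1/2) *\<^sub>R (?Y1 * ?Y1 - ?Y0 * ?Y0)"
    by (simp only: Yseq.simps(2)[of B "Suc n"] Yseq.simps(2)[of B n]) (simp add: algebra_simps)
  also have "?Y1 * ?Y1 - ?Y0 * ?Y0 = (?Y1 + ?Y0) * (?Y1 - ?Y0)"
    using Yseq_commute_Suc[of B n] by (simp add: algebra_simps)
  finally have "norm (Yseq B (Suc (Suc n)) - ?Y1) = (1/2) * norm ((?Y1 + ?Y0) * (?Y1 - ?Y0))" by simp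
  also have "\<dots> \<le> (1/2) * ((yseq b (Suc n) + yseq b n) * (yseq b (Suc n) - yseq b n))"
  proof (intro mult_left_mono order_trans[OF norm_mult_ineq] mult_mono)
    show "norm (?Y1 + ?Y0) \<le> yseq b (Suc n) + yseq b n"
      using Yseq_norm[OF assms(1)] by (intro order_trans[OF norm_triangle_ineq] add_mono)
    show "norm (?Y1 - ?Y0) \<le> yseq b (Suc n) - yseq b n" by (rule Suc)
    have p1: "0 \<le> yseq b (Suc n)" and p2: "0 \<le> yseq b n" using yseq_nonneg[OF assms(2)] by blast+
    show "0 \<le> yseq b (Suc n) + yseq b n" by (rule add_nonneg_nonneg[OF p1 p2])
  qed auto
  also have "\<dots> = yseq b (Suc (Suc n)) - yseq b (Suc n)"
    by (simp add: power2_eq_square algebra_simps)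
  finally show ?case .
qed

lemma Yseq_diff_gen:
  assumes "norm B \<le> b" "0 \<le> b" "b \<le> 1" "n \<le> m"
  shows "norm (Yseq B m - Yseq B n) \<le> yseq b m - yseq b n"
  using assms(4)
proof (induction m rule: dec_induct)
  case (step m)
  have "norm (Yseq B (Suc m) - Yseq B n) \<le> norm (Yseq B (Suc m) - Yseq B m) + norm (Yseq B m - Yseq B n)"
    by (rule order_trans[OF _ norm_triangle_ineq]) simp
  also have "\<dots> \<le> (yseq b (Suc m) - yseq b m) + (yseq b m - yseq b n)"
    by (intro add_mono Yseq_diff assms step)
  finally show ?case by simp
qed simp

lemma Yseq_Cauchy:
  assumes "norm B \<le> 1"
  shows "Cauchy (Yseq B)"
proof (rule metric_CauchyI)
  fix e :: real assume "e > 0"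
  have nb: "norm B \<le> norm B" "0 \<le> norm B" "norm B \<le> 1" using assms by auto
  obtain M where M: "\<forall>m\<ge>M. \<forall>n\<ge>M. dist (yseq (norm B) m) (yseq (norm B) n) < e"
    using metric_CauchyD[OF yseq_Cauchy[OF nb(2,3)] \<open>e > 0\<close>] by blast
  have "dist (Yseq B m) (Yseq B n) < e" if "m \<ge> M" "n \<ge> M" for m n
  proof (cases "n \<le> m")
    case True
    have "dist (Yseq B m) (Yseq B n) \<le> yseq (norm B) m - yseq (norm B) n"
      unfolding dist_norm by (rule Yseq_diff_gen[OF nb True])
    also have "\<dots> \<le> dist (yseq (norm B) m) (yseq (norm B) n)" by (simp add: dist_real_def)
    finally show ?thesis using M that by fastforce
  next
    case False
    have "dist (Yseq B m) (Yseq B n) = norm (Yseq B n - Yseq B m)" by (simp add: dist_norm norm_minus_commute)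
    also have "\<dots> \<le> yseq (norm B) n - yseq (norm B) m" using False by (intro Yseq_diff_gen[OF nb]) simp
    also have "\<dots> \<le> dist (yseq (norm B) m) (yseq (norm B) n)" by (simp add: dist_real_def)
    finally show ?thesis using M that by fastforce
  qed
  thus "\<exists>M. \<forall>m\<ge>M. \<forall>n\<ge>M. dist (Yseq B m) (Yseq B n) < e" by blast
qed

definition Ylim :: "'x bop \<Rightarrow> 'x bop" where "Ylim B = lim (Yseq B)"

lemma Ylim_tendsto: "norm B \<le> 1 \<Longrightarrow> Yseq B \<longlonglongrightarrow> Ylim B"
  unfolding Ylim_def using Yseq_Cauchy Cauchy_convergent convergent_LIMSEQ_iff by blast

lemma Ylim_eq:
  assumes "norm B \<le> 1"
  shows "Ylim B = (1/2) *\<^sub>R (B + Ylim B * Ylim B)"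
proof -
  have "(\<lambda>n. Yseq B (Suc n)) \<longlonglongrightarrow> Ylim B" using Ylim_tendsto[OF assms] by (rule LIMSEQ_Suc)
  moreover have "(\<lambda>n. Yseq B (Suc n)) \<longlonglongrightarrow> (1/2) *\<^sub>R (B + Ylim B * Ylim B)"
    unfolding Yseq.simps using Ylim_tendsto[OF assms] by (intro tendsto_intros)
  ultimately show ?thesis by (rule LIMSEQ_unique)
qed

lemma Ylim_norm:
  assumes "norm B \<le> 1"
  shows "norm (Ylim B) \<le> 1"
proof -
  have "(\<lambda>n. norm (Yseq B n)) \<longlonglongrightarrow> norm (Ylim B)" using Ylim_tendsto[OF assms] by (rule tendsto_norm)
  moreover have "norm (Yseq B n) \<le> 1" for n
    using Yseq_norm[OF assms, of n] yseq_props[of 1 n] by simp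
  ultimately show ?thesis by (intro LIMSEQ_le_const2) auto
qed

lemma Ylim_intertwine:
  assumes "norm B1 \<le> 1" "norm B2 \<le> 1" "T * B1 = B2 * T"
  shows "T * Ylim B1 = Ylim B2 * T"
proof -
  have "(\<lambda>n. T * Yseq B1 n) \<longlonglongrightarrow> T * Ylim B1" using Ylim_tendsto[OF assms(1)] by (intro tendsto_intros)
  moreover have "(\<lambda>n. T * Yseq B1 n) \<longlonglongrightarrow> Ylim B2 * T"
    unfolding Yseq_intertwine[OF assms(3)] using Ylim_tendsto[OF assms(2)] by (intro tendsto_intros)
  ultimately show ?thesis by (rule LIMSEQ_unique)
qed

lemma Ylim_herm:
  assumes "norm B \<le> 1" "adj B = B"
  shows "adj (Ylim B) = Ylim B"
proof -
  have h: "adj (Yseq B n) = Yseq B n" for n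
    by (induction n) (simp_all add: adj_scaleR adj_add adj_mult assms(2))
  have "(\<lambda>n. adj (Yseq B n)) \<longlonglongrightarrow> adj (Ylim B)" using Ylim_tendsto[OF assms(1)] by (rule tendsto_adj)
  hence "Yseq B \<longlonglongrightarrow> adj (Ylim B)" by (simp add: h)
  thus ?thesis using Ylim_tendsto[OF assms(1)] by (rule LIMSEQ_unique)
qed

lemma norm_one_minus_pos:
  assumes A: "pos A" and n: "norm A \<le> 1"
  shows "norm (1 - A) \<le> 1"
proof (rule norm_bop_bound)
  fix v
  have r: "Re (cinner v (ap A v)) = qf A v" by (simp add: qf_def cinner_commute[of v])
  have "(norm (ap (1 - A) v))\<^sup>2 = Re (cinner (v - ap A v) (v - ap A v))" by (simp add: cinner_self)
  also have "\<dots> = Re (cinner v v) - Re (cinner v (ap A v)) - Re (cinner (ap A v) v) + Re (cinner (ap A v) (ap A v))"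
    by (simp add: cinner_diff_left cinner_diff_right)
  also have "\<dots> = (norm v)\<^sup>2 - 2 * qf A v + (norm (ap A v))\<^sup>2"
    by (simp only: r cinner_self Re_complex_of_real) (simp add: qf_def)
  also have "(norm (ap A v))\<^sup>2 \<le> qf A v"
    using pos_norm_sq[OF A, of v] mult_right_mono[OF n pos_qf_nonneg[OF A, of v]] by simp
  hence "(norm v)\<^sup>2 - 2 * qf A v + (norm (ap A v))\<^sup>2 \<le> (norm v)\<^sup>2"
    using pos_qf_nonneg[OF A, of v] by simp
  finally have "(norm (ap (1 - A) v))\<^sup>2 \<le> (norm v)\<^sup>2" .
  thus "norm (ap (1 - A) v) \<le> 1 * norm v" by (simp add: power2_le_iff_abs_le)
qed simp

definition sqrtc :: "real \<Rightarrow> 'x bop \<Rightarrow> 'x bop" where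
  "sqrtc c A = sqrt c *\<^sub>R (1 - Ylim (1 - (1/c) *\<^sub>R A))"

lemma pos_scaleR: "pos A \<Longrightarrow> 0 \<le> r \<Longrightarrow> pos (r *\<^sub>R A)"
  unfolding pos_def by (simp add: scaleR_cscale)

lemma sqrtc_props:
  assumes A: "pos A" and c: "c \<ge> 1" "norm A \<le> c"
  shows "pos (sqrtc c A)" "sqrtc c A * sqrtc c A = A"
proof -
  define A' where "A' = (1/c) *\<^sub>R A"
  define B where "B = 1 - A'"
  define Y where "Y = Ylim B"
  have A'p: "pos A'" unfolding A'_def using c by (intro pos_scaleR A) auto
  have nA': "norm A' \<le> 1" using c by (simp add: A'_def divide_le_eq)
  have nB: "norm B \<le> 1" unfolding B_def by (rule norm_one_minus_pos[OF A'p nA'])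
  have hB: "adj B = B" by (simp add: B_def adj_diff pos_herm[OF A'p])
  have hY: "adj Y = Y" unfolding Y_def by (rule Ylim_herm[OF nB hB])
  have nY: "norm Y \<le> 1" unfolding Y_def by (rule Ylim_norm[OF nB])
  have h: "Y = (1/2) *\<^sub>R (B + Y * Y)" using Ylim_eq[OF nB] unfolding Y_def[symmetric] .
  hence "2 *\<^sub>R Y = 2 *\<^sub>R ((1/2) *\<^sub>R (B + Y * Y))" by (rule arg_cong)
  hence "2 *\<^sub>R Y = B + Y * Y" by simp
  hence eq: "Y * Y = 2 *\<^sub>R Y - B" by (metis add_diff_cancel_left')
  have sq: "(1 - Y) * (1 - Y) = A'"
    by (simp add: algebra_simps eq B_def) (simp add: scaleR_2)
  have s: "sqrtc c A = sqrt c *\<^sub>R (1 - Y)" by (simp add: sqrtc_def Y_def B_def A'_def)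
  show "sqrtc c A * sqrtc c A = A"
    unfolding s using c by (simp add: sq A'_def)
  have "pos (1 - Y)" unfolding pos_def
  proof
    fix v
    have r: "cinner (ap Y v) v \<in> \<real>"
      by (metis Reals_cnj_iff cinner_commute herm_cinner[OF hY])
    have "Re (cinner (ap Y v) v) \<le> cmod (cinner (ap Y v) v)" by (rule complex_Re_le_cmod)
    also have "\<dots> \<le> norm (ap Y v) * norm v" by (rule cinner_cauchy_schwarz)
    also have "\<dots> \<le> norm Y * norm v * norm v" by (intro mult_right_mono norm_ap) simp
    also have "\<dots> \<le> (norm v)\<^sup>2" using mult_right_mono[OF nY, of "norm v * norm v"]
      by (simp add: power2_eq_square mult.assoc)
    finally have le: "Re (cinner (ap Y v) v) \<le> (norm v)\<^sup>2" .
    have "cinner (ap (1 - Y) v) v = complex_of_real ((norm v)\<^sup>2) - cinner (ap Y v) v"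
      by (simp add: cinner_diff_left cinner_self)
    thus "cinner (ap (1 - Y) v) v \<in> \<real> \<and> 0 \<le> Re (cinner (ap (1 - Y) v) v)"
      using r le by simp
  qed
  thus "pos (sqrtc c A)" unfolding s by (rule pos_scaleR) (use c in simp)
qed

lemma pos_diff_herm: "adj A = A \<Longrightarrow> adj B = B \<Longrightarrow> adj (A - B) = A - B"
  by (simp add: adj_diff)

lemma sqrt_unique_aux:
  assumes S: "pos S" and R: "pos R" and eq: "S * S = R * R" and com: "S * R = R * S"
  shows "S = R"
proof -
  define D where "D = S - R"
  have hS: "adj S = S" by (rule pos_herm[OF S])
  have hR: "adj R = R" by (rule pos_herm[OF R])
  have hD: "adj D = D" unfolding D_def by (simp add: adj_diff hS hR)
  have z: "D * S * D + D * R * D = 0"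
  proof -
    have "D * S * D + D * R * D = D * ((S + R) * (S - R))"
      by (simp add: D_def algebra_simps)
    also have "(S + R) * (S - R) = 0" using eq com by (simp add: algebra_simps)
    finally show ?thesis by simp
  qed
  have "ap D (ap D v) = 0" for v
  proof -
    define w where "w = ap D v"
    have "qf S w + qf R w = Re (cinner (ap (D * S * D + D * R * D) v) v)"
      by (simp add: qf_def w_def cinner_add_left herm_cinner[OF hD])
    hence "qf S w + qf R w = 0" using z by simp
    hence "qf S w = 0" "qf R w = 0" using pos_qf_nonneg[OF S, of w] pos_qf_nonneg[OF R, of w] by auto
    hence "ap S w = 0" "ap R w = 0" using pos_qf_zero S R by blast+
    thus ?thesis by (simp add: D_def w_def)
  qed
  hence "ap D v = 0" for v
  proof -
    have "(norm (ap D v))\<^sup>2 = Re (cinner (ap D v) (ap D v))" by (simp add: cinner_self)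
    also have "\<dots> = Re (cinner (ap D (ap D v)) v)" by (simp add: herm_cinner[OF hD])
    finally show ?thesis using \<open>\<And>v. ap D (ap D v) = 0\<close> by simp
  qed
  hence "D = 0" by (intro bop_eqI) simp
  thus ?thesis by (simp add: D_def)
qed

lemma sqrtc_commute:
  assumes A: "pos A" and c: "c \<ge> 1" "norm A \<le> c" and C: "C * A = A * C"
  shows "C * sqrtc c A = sqrtc c A * C"
proof -
  define B where "B = 1 - (1/c) *\<^sub>R A"
  have A'p: "pos ((1/c) *\<^sub>R A)" using c by (intro pos_scaleR A) auto
  have nB: "norm B \<le> 1" unfolding B_def using c
    by (intro norm_one_minus_pos[OF A'p]) (simp add: divide_le_eq)
  have "C * B = B * C" using C by (simp add: B_def algebra_simps)
  hence "C * Ylim B = Ylim B * C" by (rule Ylim_intertwine[OF nB nB])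
  thus ?thesis by (simp add: sqrtc_def B_def[symmetric] algebra_simps)
qed

lemma sqrtc_unique:
  assumes A: "pos A" and c: "c \<ge> 1" "norm A \<le> c" and S: "pos S" "S * S = A"
  shows "S = sqrtc c A"
proof (rule sqrt_unique_aux[OF S(1) sqrtc_props(1)[OF A c]])
  show "S * S = sqrtc c A * sqrtc c A" using sqrtc_props(2)[OF A c] S(2) by simp
  have "S * A = A * S" unfolding S(2)[symmetric] by (simp add: mult.assoc)
  thus "S * sqrtc c A = sqrtc c A * S" by (rule sqrtc_commute[OF A c])
qed

definition sqrtop :: "'x bop \<Rightarrow> 'x bop" where "sqrtop A = sqrtc (max 1 (norm A)) A"

lemma sqrtop_props: "pos A \<Longrightarrow> pos (sqrtop A)" "pos A \<Longrightarrow> sqrtop A * sqrtop A = A"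
  unfolding sqrtop_def by (rule sqrtc_props; simp)+

lemma sqrtop_unique: "pos A \<Longrightarrow> pos S \<Longrightarrow> S * S = A \<Longrightarrow> S = sqrtop A"
  unfolding sqrtop_def by (rule sqrtc_unique) simp_all

lemma sqrtop_eq_sqrtc: "pos A \<Longrightarrow> c \<ge> 1 \<Longrightarrow> norm A \<le> c \<Longrightarrow> sqrtop A = sqrtc c A"
  by (metis sqrtc_props sqrtop_unique)

lemma sqrtop_intertwine:
  assumes X: "pos X" and Z: "pos Z" and T: "T * X = Z * T"
  shows "T * sqrtop X = sqrtop Z * T"
proof -
  define c where "c = max 1 (max (norm X) (norm Z))"
  have c: "c \<ge> 1" "norm X \<le> c" "norm Z \<le> c" by (auto simp: c_def)
  define BX where "BX = 1 - (1/c) *\<^sub>R X"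
  define BZ where "BZ = 1 - (1/c) *\<^sub>R Z"
  have nBX: "norm BX \<le> 1" unfolding BX_def using c
    by (intro norm_one_minus_pos pos_scaleR X) (auto simp: divide_le_eq)
  have nBZ: "norm BZ \<le> 1" unfolding BZ_def using c
    by (intro norm_one_minus_pos pos_scaleR Z) (auto simp: divide_le_eq)
  have "T * BX = BZ * T" using T by (simp add: BX_def BZ_def algebra_simps)
  hence "T * Ylim BX = Ylim BZ * T" by (rule Ylim_intertwine[OF nBX nBZ])
  hence "T * sqrtc c X = sqrtc c Z * T" by (simp add: sqrtc_def BX_def[symmetric] BZ_def[symmetric] algebra_simps)
  thus ?thesis using sqrtop_eq_sqrtc[OF X c(1,2)] sqrtop_eq_sqrtc[OF Z c(1,3)] by simp
qed

lemma sqrtop_commute: "pos A \<Longrightarrow> C * A = A * C \<Longrightarrow> C * sqrtop A = sqrtop A * C"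
  by (rule sqrtop_intertwine)



lemma geom_partial1: "(1 - x) * (\<Sum>k<n. x ^ k) = 1 - x ^ n"
  for x :: "'a::ring_1"
proof (induction n)
  case (Suc n)
  have "(1 - x) * (\<Sum>k<Suc n. x ^ k) = (1 - x) * (\<Sum>k<n. x ^ k) + (1 - x) * x ^ n"
    by (simp add: distrib_left)
  also have "\<dots> = 1 - x ^ Suc n" by (simp only: Suc) (simp add: left_diff_distrib)
  finally show ?case .
qed simp

lemma geom_partial2: "(\<Sum>k<n. x ^ k) * (1 - x) = 1 - x ^ n"
  for x :: "'a::ring_1"
proof (induction n)
  case (Suc n)
  have "(\<Sum>k<Suc n. x ^ k) * (1 - x) = (\<Sum>k<n. x ^ k) * (1 - x) + x ^ n * (1 - x)"
    by (simp add: distrib_right)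
  also have "\<dots> = 1 - x ^ Suc n" by (simp only: Suc) (simp add: right_diff_distrib power_commutes)
  finally show ?case .
qed simp

lemmas geom_partial = geom_partial1 geom_partial2

lemma geom_inverse:
  fixes x :: "'x bop"
  assumes x: "norm x < 1"
  shows "(1 - x) * suminf (\<lambda>n. x ^ n) = 1" "suminf (\<lambda>n. x ^ n) * (1 - x) = 1"
proof -
  have s: "summable (\<lambda>n. x ^ n)" by (rule complete_algebra_summable_geometric[OF x])
  have L: "(\<lambda>n. \<Sum>k<n. x ^ k) \<longlonglongrightarrow> suminf (\<lambda>n. x ^ n)" by (rule summable_LIMSEQ[OF s])
  have p: "(\<lambda>n. 1 - x ^ n) \<longlonglongrightarrow> 1 - 0" using x by (intro tendsto_intros LIMSEQ_power_zero)
  have "(\<lambda>n. (1 - x) * (\<Sum>k<n. x ^ k)) \<longlonglongrightarrow> (1 - x) * suminf (\<lambda>n. x ^ n)"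
    using L by (intro tendsto_intros)
  moreover have "(\<lambda>n. (1 - x) * (\<Sum>k<n. x ^ k)) \<longlonglongrightarrow> 1" using p by (simp add: geom_partial)
  ultimately show "(1 - x) * suminf (\<lambda>n. x ^ n) = 1" by (rule LIMSEQ_unique)
  have "(\<lambda>n. (\<Sum>k<n. x ^ k) * (1 - x)) \<longlonglongrightarrow> suminf (\<lambda>n. x ^ n) * (1 - x)"
    using L by (intro tendsto_intros)
  moreover have "(\<lambda>n. (\<Sum>k<n. x ^ k) * (1 - x)) \<longlonglongrightarrow> 1" using p by (simp add: geom_partial)
  ultimately show "suminf (\<lambda>n. x ^ n) * (1 - x) = 1" by (rule LIMSEQ_unique)
qed

lemma herm_real: "adj X = X \<Longrightarrow> cinner (ap X v) v \<in> \<real>"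
  by (metis Reals_cnj_iff cinner_commute herm_cinner)

lemma pos_norm_le:
  assumes X: "pos X" and k: "0 \<le> k" and q: "\<And>v. qf X v \<le> k * (norm v)\<^sup>2"
  shows "norm X \<le> k"
proof -
  have "norm X \<le> sqrt (norm X * k)"
  proof (rule norm_bop_bound)
    fix v
    have "(norm (ap X v))\<^sup>2 \<le> norm X * qf X v" by (rule pos_norm_sq[OF X])
    also have "\<dots> \<le> norm X * (k * (norm v)\<^sup>2)" by (intro mult_left_mono q) simp
    finally have "(norm (ap X v))\<^sup>2 \<le> (sqrt (norm X * k) * norm v)\<^sup>2"
      using k by (simp add: power_mult_distrib mult.assoc)
    thus "norm (ap X v) \<le> sqrt (norm X * k) * norm v"
      by (rule power2_le_imp_le) (use k in simp)
  qed (use k in simp)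
  hence "(norm X)\<^sup>2 \<le> norm X * k" using k
    by (metis norm_ge_zero power_mono real_sqrt_pow2 zero_le_mult_iff)
  thus ?thesis by (cases "norm X = 0") (use k in \<open>auto simp: power2_eq_square\<close>)
qed

lemma pos_add: "pos A \<Longrightarrow> pos B \<Longrightarrow> pos (A + B)"
  unfolding pos_def by (auto simp: cinner_add_left)

lemma pos_one: "pos 1"
  unfolding pos_def by (simp add: cinner_self)

lemma qf_simps: "qf (A + B) v = qf A v + qf B v" "qf (A - B) v = qf A v - qf B v"
  "qf (r *\<^sub>R A) v = r * qf A v" "qf 1 v = (norm v)\<^sup>2"
  by (simp_all add: qf_def cinner_add_left cinner_diff_left cinner_self)

lemma pos_shift_inverse:
  assumes P: "pos P" and e: "e > 0"
  obtains Mi where "(P + e *\<^sub>R 1) * Mi = 1" "Mi * (P + e *\<^sub>R 1) = 1"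
proof -
  define c where "c = norm P + e"
  have c0: "c > 0" using e by (simp add: c_def add_nonneg_pos)
  define x where "x = (1 - e / c) *\<^sub>R 1 - (1/c) *\<^sub>R P"
  have hx: "adj x = x" by (simp add: x_def adj_diff adj_scaleR pos_herm[OF P])
  have qx: "qf x v = (1 - e / c) * (norm v)\<^sup>2 - qf P v / c" for v
    by (simp add: x_def qf_simps)
  have xpos: "pos x" unfolding pos_def
  proof
    fix v
    have qle: "qf P v \<le> norm P * (norm v)\<^sup>2" by (rule qf_le_norm)
    have "(1 - e / c) * (norm v)\<^sup>2 = (norm P * (norm v)\<^sup>2) / c" using c0 by (simp add: c_def field_simps)
    hence "qf P v / c \<le> (1 - e / c) * (norm v)\<^sup>2"
      using divide_right_mono[OF qle, of c] c0 by simp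
    hence "0 \<le> qf x v" by (simp add: qx)
    thus "cinner (ap x v) v \<in> \<real> \<and> 0 \<le> Re (cinner (ap x v) v)"
      using herm_real[OF hx] by (simp add: qf_def)
  qed
  have "norm x \<le> 1 - e / c"
  proof (rule pos_norm_le[OF xpos])
    show "0 \<le> 1 - e / c" using c0 e by (simp add: c_def field_simps)
    show "qf x v \<le> (1 - e / c) * (norm v)\<^sup>2" for v
      using pos_qf_nonneg[OF P, of v] c0 by (simp add: qx)
  qed
  moreover have "e / c > 0" using c0 e by simp
  ultimately have nx: "norm x < 1" by linarith
  define Mi where "Mi = (1/c) *\<^sub>R suminf (\<lambda>n. x ^ n)"
  have eq: "P + e *\<^sub>R 1 = c *\<^sub>R (1 - x)"
    using c0 by (simp add: x_def algebra_simps)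
  show ?thesis
  proof
    show "(P + e *\<^sub>R 1) * Mi = 1" using c0 geom_inverse(1)[OF nx] by (simp add: eq Mi_def)
    show "Mi * (P + e *\<^sub>R 1) = 1" using c0 geom_inverse(2)[OF nx] by (simp add: eq Mi_def)
  qed
qed

lemma inv_herm:
  assumes "adj M = M" "M * Mi = 1" "Mi * M = 1"
  shows "adj Mi = Mi"
proof -
  have "adj (M * Mi) = adj 1" using assms(2) by simp
  hence am: "adj Mi * M = 1" by (simp add: adj_mult assms(1))
  have "adj Mi = adj Mi * (M * Mi)" by (simp add: assms(2))
  also have "\<dots> = (adj Mi * M) * Mi" by (simp only: mult.assoc)
  also have "\<dots> = Mi" by (simp add: am)
  finally show ?thesis .
qed

lemma inv_commute:
  fixes C M Mi :: "'a::monoid_mult"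
  assumes "C * M = M * C" "M * Mi = 1" "Mi * M = 1"
  shows "C * Mi = Mi * C"
proof -
  have "C * Mi = (Mi * M) * C * Mi" by (simp only: assms(3) mult_1_left)
  also have "\<dots> = Mi * (C * M) * Mi" by (simp add: assms(1) mult.assoc)
  also have "\<dots> = Mi * C * (M * Mi)" by (simp add: mult.assoc)
  also have "\<dots> = Mi * C" by (simp add: assms(2))
  finally show ?thesis .
qed



section \<open>Schur multipliers of Gram matrices\<close>

lemma has_sum_sum_fun:
  fixes f :: "'i \<Rightarrow> 'a \<Rightarrow> 'b::topological_comm_monoid_add"
  assumes "finite I" "\<And>i. i \<in> I \<Longrightarrow> (f i has_sum s i) A"
  shows "((\<lambda>k. \<Sum>i\<in>I. f i k) has_sum (\<Sum>i\<in>I. s i)) A"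
  using assms by (induction I rule: finite_induct) (auto intro: has_sum_add)

lemma l2_cs:
  fixes f g :: "'x \<Rightarrow> real"
  assumes f: "(\<lambda>k. (f k)\<^sup>2) summable_on UNIV" and g: "(\<lambda>k. (g k)\<^sup>2) summable_on UNIV"
    and fn: "\<And>k. f k \<ge> 0" and gn: "\<And>k. g k \<ge> 0"
  shows "(\<lambda>k. f k * g k) summable_on UNIV"
    "infsum (\<lambda>k. f k * g k) UNIV \<le> sqrt (infsum (\<lambda>k. (f k)\<^sup>2) UNIV) * sqrt (infsum (\<lambda>k. (g k)\<^sup>2) UNIV)"
proof -
  have fl: "(\<lambda>k. complex_of_real (f k)) \<in> l2" using f fn by (simp add: l2_def)
  have gl: "(\<lambda>k. complex_of_real (g k)) \<in> l2" using g gn by (simp add: l2_def)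
  show s: "(\<lambda>k. f k * g k) summable_on UNIV"
    using l2_prod_abs_summable[OF fl gl] fn gn by simp
  define u :: "'x ell2" where "u = Abs_ell2 (\<lambda>k. complex_of_real (f k))"
  define v :: "'x ell2" where "v = Abs_ell2 (\<lambda>k. complex_of_real (g k))"
  have vu: "vc u = (\<lambda>k. complex_of_real (f k))" by (simp add: u_def vc_Abs fl)
  have vv: "vc v = (\<lambda>k. complex_of_real (g k))" by (simp add: v_def vc_Abs gl)
  have "cinner u v = infsum (\<lambda>k. complex_of_real (f k * g k)) UNIV"
    by (simp add: cinner.rep_eq l2inner_def vu vv)
  also have "\<dots> = complex_of_real (infsum (\<lambda>k. f k * g k) UNIV)"
    using has_sum_of_real[OF has_sum_infsum[OF s]] by (rule infsumI)
  finally have "infsum (\<lambda>k. f k * g k) UNIV = Re (cinner u v)" by simp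
  also have "\<dots> \<le> cmod (cinner u v)" by (rule complex_Re_le_cmod)
  also have "\<dots> \<le> norm u * norm v" by (rule cinner_cauchy_schwarz)
  also have "norm u = sqrt (infsum (\<lambda>k. (f k)\<^sup>2) UNIV)"
    by (subst real_sqrt_unique[symmetric]) (simp_all add: norm_ell2_sq vu fn)
  also have "norm v = sqrt (infsum (\<lambda>k. (g k)\<^sup>2) UNIV)"
    by (subst real_sqrt_unique[symmetric]) (simp_all add: norm_ell2_sq vv gn)
  finally show "infsum (\<lambda>k. f k * g k) UNIV \<le> sqrt (infsum (\<lambda>k. (f k)\<^sup>2) UNIV) * sqrt (infsum (\<lambda>k. (g k)\<^sup>2) UNIV)" .
qed

lemma norm_sum_ket_coeff:
  fixes c :: "'i \<Rightarrow> complex" and w :: "'i \<Rightarrow> 'x ell2"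
  assumes G: "finite G"
  defines "f \<equiv> (\<lambda>k. (norm (\<Sum>j\<in>G. (c j * vc (w j) k) *\<^sub>C ket j))\<^sup>2)"
  shows "(f has_sum (\<Sum>j\<in>G. (cmod (c j))\<^sup>2 * (norm (w j))\<^sup>2)) UNIV"
proof -
  have f: "f k = (\<Sum>j\<in>G. (cmod (c j))\<^sup>2 * (cmod (vc (w j) k))\<^sup>2)" for k
    unfolding f_def by (simp add: norm_sum_ket_sq[OF G] norm_mult power_mult_distrib)
  have "((\<lambda>k. (cmod (c j))\<^sup>2 * (cmod (vc (w j) k))\<^sup>2) has_sum ((cmod (c j))\<^sup>2 * (norm (w j))\<^sup>2)) UNIV" for j
    unfolding norm_ell2_sq
    by (rule has_sum_cmult_right, rule has_sum_infsum) (use vc_l2[of "w j"] in \<open>simp add: l2_def\<close>)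
  hence "((\<lambda>k. \<Sum>j\<in>G. (cmod (c j))\<^sup>2 * (cmod (vc (w j) k))\<^sup>2) has_sum
      (\<Sum>j\<in>G. (cmod (c j))\<^sup>2 * (norm (w j))\<^sup>2)) UNIV"
    by (intro has_sum_sum_fun G)
  thus ?thesis unfolding f[abs_def] .
qed

lemma schur_finite_bound:
  fixes a b :: "'x \<Rightarrow> 'x ell2" and R :: "'x bop" and x y :: "'x \<Rightarrow> complex"
  assumes na: "\<And>i. (norm (a i))\<^sup>2 \<le> \<alpha>" and nb: "\<And>j. (norm (b j))\<^sup>2 \<le> \<beta>"
    and nR: "norm R \<le> 1" and F: "finite F" and G: "finite G"
  shows "cmod (\<Sum>i\<in>F. \<Sum>j\<in>G. vc (ap R (ket j)) i * cinner (b j) (a i) * x j * cnj (y i))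
     \<le> sqrt \<alpha> * sqrt \<beta> * sqrt (\<Sum>j\<in>G. (cmod (x j))\<^sup>2) * sqrt (\<Sum>i\<in>F. (cmod (y i))\<^sup>2)"
proof -
  define bk where "bk k = (\<Sum>j\<in>G. (x j * vc (b j) k) *\<^sub>C ket j)" for k
  define ak where "ak k = (\<Sum>i\<in>F. (y i * vc (a i) k) *\<^sub>C ket i)" for k
  define h where "h i j k = vc (ap R (ket j)) i * x j * cnj (y i) * (vc (b j) k * cnj (vc (a i) k))" for i j k
  have c1: "cinner (ap R (bk k)) (ak k) = (\<Sum>i\<in>F. \<Sum>j\<in>G. h i j k)" for k
  proof -
    have "ap R (bk k) = (\<Sum>j\<in>G. (x j * vc (b j) k) *\<^sub>C ap R (ket j))"
      unfolding bk_def by (simp add: linear_sum[OF bounded_linear.linear[OF bounded_linear_ap]])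
    hence "cinner (ap R (bk k)) (ak k) = (\<Sum>i\<in>F. \<Sum>j\<in>G. (x j * vc (b j) k) * cnj (y i * vc (a i) k) * vc (ap R (ket j)) i)"
      by (simp add: ak_def cinner_sum_right vc_sum sum_distrib_left sum_distrib_right mult_ac)
    also have "\<dots> = (\<Sum>i\<in>F. \<Sum>j\<in>G. h i j k)"
      by (simp add: h_def mult_ac)
    finally show ?thesis .
  qed
  have hs: "((\<lambda>k. h i j k) has_sum (vc (ap R (ket j)) i * cinner (b j) (a i) * x j * cnj (y i))) UNIV" for i j
  proof -
    have "((\<lambda>k. vc (b j) k * cnj (vc (a i) k)) has_sum cinner (b j) (a i)) UNIV"
      unfolding cinner.rep_eq l2inner_def by (rule has_sum_infsum, rule l2_inner_summable) simp_all
    from has_sum_cmult_right[OF this, of "vc (ap R (ket j)) i * x j * cnj (y i)"]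
    show ?thesis by (simp add: h_def mult_ac)
  qed
  have hsum: "((\<lambda>k. cinner (ap R (bk k)) (ak k)) has_sum
      (\<Sum>i\<in>F. \<Sum>j\<in>G. vc (ap R (ket j)) i * cinner (b j) (a i) * x j * cnj (y i))) UNIV"
    unfolding c1 by (intro has_sum_sum_fun F G hs)
  define nbk where "nbk k = norm (bk k)" for k
  define nak where "nak k = norm (ak k)" for k
  have hb: "((\<lambda>k. (nbk k)\<^sup>2) has_sum (\<Sum>j\<in>G. (cmod (x j))\<^sup>2 * (norm (b j))\<^sup>2)) UNIV"
    unfolding nbk_def bk_def by (rule norm_sum_ket_coeff[OF G])
  have ha: "((\<lambda>k. (nak k)\<^sup>2) has_sum (\<Sum>i\<in>F. (cmod (y i))\<^sup>2 * (norm (a i))\<^sup>2)) UNIV"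
    unfolding nak_def ak_def by (rule norm_sum_ket_coeff[OF F])
  have cs: "(\<lambda>k. nbk k * nak k) summable_on UNIV"
    "infsum (\<lambda>k. nbk k * nak k) UNIV \<le> sqrt (infsum (\<lambda>k. (nbk k)\<^sup>2) UNIV) * sqrt (infsum (\<lambda>k. (nak k)\<^sup>2) UNIV)"
    using l2_cs[of nbk nak] hb ha by (auto simp: nbk_def nak_def dest: has_sum_imp_summable)
  have bnd: "cmod (cinner (ap R (bk k)) (ak k)) \<le> nbk k * nak k" for k
  proof -
    have "cmod (cinner (ap R (bk k)) (ak k)) \<le> norm (ap R (bk k)) * norm (ak k)" by (rule cinner_cauchy_schwarz)
    also have "\<dots> \<le> norm R * norm (bk k) * norm (ak k)" by (intro mult_right_mono norm_ap) simp
    also have "\<dots> \<le> norm (bk k) * norm (ak k)" using nR by (simp add: mult_left_le_one_le mult.assoc)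
    finally show ?thesis by (simp add: nbk_def nak_def)
  qed
  have "cmod (\<Sum>i\<in>F. \<Sum>j\<in>G. vc (ap R (ket j)) i * cinner (b j) (a i) * x j * cnj (y i))
      = cmod (infsum (\<lambda>k. cinner (ap R (bk k)) (ak k)) UNIV)"
    using hsum by (simp add: infsumI)
  also have "\<dots> \<le> infsum (\<lambda>k. cmod (cinner (ap R (bk k)) (ak k))) UNIV"
  proof (rule norm_infsum_bound)
    show "(\<lambda>k. norm (cinner (ap R (bk k)) (ak k))) summable_on UNIV"
      by (rule summable_on_comparison_test[OF cs(1)]) (use bnd in auto)
  qed
  also have "\<dots> \<le> infsum (\<lambda>k. nbk k * nak k) UNIV"
  proof (rule infsum_mono[OF _ cs(1)])
    show "(\<lambda>k. cmod (cinner (ap R (bk k)) (ak k))) summable_on UNIV"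
      by (rule summable_on_comparison_test[OF cs(1)]) (use bnd in auto)
  qed (use bnd in auto)
  also have "\<dots> \<le> sqrt (infsum (\<lambda>k. (nbk k)\<^sup>2) UNIV) * sqrt (infsum (\<lambda>k. (nak k)\<^sup>2) UNIV)" by (rule cs(2))
  also have "infsum (\<lambda>k. (nbk k)\<^sup>2) UNIV = (\<Sum>j\<in>G. (cmod (x j))\<^sup>2 * (norm (b j))\<^sup>2)" using hb by (rule infsumI)
  also have "infsum (\<lambda>k. (nak k)\<^sup>2) UNIV = (\<Sum>i\<in>F. (cmod (y i))\<^sup>2 * (norm (a i))\<^sup>2)" using ha by (rule infsumI)
  finally have main: "cmod (\<Sum>i\<in>F. \<Sum>j\<in>G. vc (ap R (ket j)) i * cinner (b j) (a i) * x j * cnj (y i))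
      \<le> sqrt (\<Sum>j\<in>G. (cmod (x j))\<^sup>2 * (norm (b j))\<^sup>2) * sqrt (\<Sum>i\<in>F. (cmod (y i))\<^sup>2 * (norm (a i))\<^sup>2)" .
  have b0: "\<beta> \<ge> 0" using nb[of undefined] by (metis order_trans zero_le_power2)
  have "(\<Sum>j\<in>G. (cmod (x j))\<^sup>2 * (norm (b j))\<^sup>2) \<le> (\<Sum>j\<in>G. \<beta> * (cmod (x j))\<^sup>2)"
    by (intro sum_mono) (metis mult.commute mult_right_mono nb zero_le_power2)
  also have "\<dots> = \<beta> * (\<Sum>j\<in>G. (cmod (x j))\<^sup>2)" by (rule sum_distrib_left[symmetric])
  finally have e1: "sqrt (\<Sum>j\<in>G. (cmod (x j))\<^sup>2 * (norm (b j))\<^sup>2) \<le> sqrt \<beta> * sqrt (\<Sum>j\<in>G. (cmod (x j))\<^sup>2)"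
    unfolding real_sqrt_mult[symmetric] by (rule real_sqrt_le_mono)
  have "(\<Sum>i\<in>F. (cmod (y i))\<^sup>2 * (norm (a i))\<^sup>2) \<le> (\<Sum>i\<in>F. \<alpha> * (cmod (y i))\<^sup>2)"
    by (intro sum_mono) (metis mult.commute mult_right_mono na zero_le_power2)
  also have "\<dots> = \<alpha> * (\<Sum>i\<in>F. (cmod (y i))\<^sup>2)" by (rule sum_distrib_left[symmetric])
  finally have e2: "sqrt (\<Sum>i\<in>F. (cmod (y i))\<^sup>2 * (norm (a i))\<^sup>2) \<le> sqrt \<alpha> * sqrt (\<Sum>i\<in>F. (cmod (y i))\<^sup>2)"
    unfolding real_sqrt_mult[symmetric] by (rule real_sqrt_le_mono)
  have "sqrt (\<Sum>j\<in>G. (cmod (x j))\<^sup>2 * (norm (b j))\<^sup>2) * sqrt (\<Sum>i\<in>F. (cmod (y i))\<^sup>2 * (norm (a i))\<^sup>2)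
      \<le> (sqrt \<beta> * sqrt (\<Sum>j\<in>G. (cmod (x j))\<^sup>2)) * (sqrt \<alpha> * sqrt (\<Sum>i\<in>F. (cmod (y i))\<^sup>2))"
    by (rule mult_mono[OF e1 e2]) (auto simp: b0 sum_nonneg)
  with main show ?thesis by (simp add: mult_ac)
qed

lemma bilinear_bounded_mat:
  fixes m :: "'x mat" and C :: real
  assumes rows: "\<And>v i. v \<in> l2 \<Longrightarrow> (\<lambda>j. m i j * v j) summable_on UNIV"
    and C: "C \<ge> 0"
    and fb: "\<And>F G x y. finite F \<Longrightarrow> finite G \<Longrightarrow>
      cmod (\<Sum>i\<in>F. \<Sum>j\<in>G. m i j * x j * cnj (y i))
        \<le> C * sqrt (\<Sum>j\<in>G. (cmod (x j))\<^sup>2) * sqrt (\<Sum>i\<in>F. (cmod (y i))\<^sup>2)"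
  shows "bounded_mat m" "norm (opm m) \<le> C"
proof -
  have main: "mat_apply m v \<in> l2 \<and> l2norm (mat_apply m v) \<le> C * l2norm v" if v: "v \<in> l2" for v
  proof -
    define z where "z = mat_apply m v"
    have vs: "(\<lambda>j. (cmod (v j))\<^sup>2) summable_on UNIV" using v by (simp add: l2_def)
    define nv where "nv = l2norm v"
    have nv0: "nv \<ge> 0" by (simp add: nv_def l2norm_def infsum_nonneg)
    have sumv: "sqrt (\<Sum>j\<in>G. (cmod (v j))\<^sup>2) \<le> nv" if "finite G" for G
      unfolding nv_def l2norm_def
      by (rule real_sqrt_le_mono, rule sum_le_infsum_nonneg[OF vs]) (use that in auto)
    have bnd: "(\<Sum>i\<in>F. (cmod (z i))\<^sup>2) \<le> (C * nv)\<^sup>2" if F: "finite F" for F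
    proof -
      define S where "S = (\<Sum>i\<in>F. (cmod (z i))\<^sup>2)"
      have S0: "S \<ge> 0" by (simp add: S_def sum_nonneg)
      have hz: "((\<lambda>j. m i j * v j) has_sum z i) UNIV" for i
        unfolding z_def mat_apply_def by (rule has_sum_infsum, rule rows[OF v])
      have lim: "((\<lambda>G. \<Sum>i\<in>F. \<Sum>j\<in>G. m i j * v j * cnj (z i)) \<longlongrightarrow> (\<Sum>i\<in>F. z i * cnj (z i)))
          (finite_subsets_at_top UNIV)"
      proof (intro tendsto_sum)
        fix i
        have "((\<lambda>G. \<Sum>j\<in>G. m i j * v j) \<longlongrightarrow> z i) (finite_subsets_at_top UNIV)"
          using hz[of i] by (simp add: has_sum_def)
        hence "((\<lambda>G. (\<Sum>j\<in>G. m i j * v j) * cnj (z i)) \<longlongrightarrow> z i * cnj (z i)) (finite_subsets_at_top UNIV)"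
          by (intro tendsto_intros)
        thus "((\<lambda>G. \<Sum>j\<in>G. m i j * v j * cnj (z i)) \<longlongrightarrow> z i * cnj (z i)) (finite_subsets_at_top UNIV)"
          by (simp add: sum_distrib_right)
      qed
      have "cmod (\<Sum>i\<in>F. z i * cnj (z i)) \<le> C * nv * sqrt S"
      proof (rule tendsto_le[OF finite_subsets_at_top_neq_bot _ tendsto_norm[OF lim]])
        show "((\<lambda>G. C * nv * sqrt S) \<longlongrightarrow> C * nv * sqrt S) (finite_subsets_at_top UNIV)" by simp
        show "\<forall>\<^sub>F G in finite_subsets_at_top UNIV. norm (\<Sum>i\<in>F. \<Sum>j\<in>G. m i j * v j * cnj (z i)) \<le> C * nv * sqrt S"
        proof (rule eventually_finite_subsets_at_top_weakI)
          fix G :: "'x set" assume G: "finite G"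
          have "norm (\<Sum>i\<in>F. \<Sum>j\<in>G. m i j * v j * cnj (z i)) \<le> C * sqrt (\<Sum>j\<in>G. (cmod (v j))\<^sup>2) * sqrt S"
            unfolding S_def by (rule fb[OF F G])
          also have "\<dots> \<le> C * nv * sqrt S" using sumv[OF G] C S0 by (intro mult_right_mono mult_left_mono) auto
          finally show "norm (\<Sum>i\<in>F. \<Sum>j\<in>G. m i j * v j * cnj (z i)) \<le> C * nv * sqrt S" .
        qed
      qed
      moreover have "(\<Sum>i\<in>F. z i * cnj (z i)) = complex_of_real S"
        by (simp add: S_def mult_cnj_self)
      ultimately have "S \<le> C * nv * sqrt S" using S0 by simp
      hence ss: "sqrt S * sqrt S \<le> (C * nv) * sqrt S" using S0 by simp
      have "sqrt S \<le> C * nv"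
      proof (cases "sqrt S = 0")
        case False
        hence "sqrt S > 0" using S0 by simp
        thus ?thesis using ss mult_le_cancel_right_pos[of "sqrt S" "sqrt S" "C * nv"] by blast
      qed (use C nv0 in simp)
      hence "(sqrt S)\<^sup>2 \<le> (C * nv)\<^sup>2" by (intro power_mono) (auto simp: S0)
      thus ?thesis using S0 by (simp add: S_def)
    qed
    have zl: "z \<in> l2" using bnd by (rule l2_of_bounded)
    have "infsum (\<lambda>i. (cmod (z i))\<^sup>2) UNIV \<le> (C * nv)\<^sup>2" using bnd by (rule l2_of_bounded)
    from real_sqrt_le_mono[OF this] have "l2norm z \<le> C * nv" using C nv0 by (simp add: l2norm_def)
    thus ?thesis using zl by (simp add: z_def nv_def)
  qed
  show bm: "bounded_mat m" unfolding bounded_mat_def using rows main by blast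
  show "norm (opm m) \<le> C"
  proof (rule norm_bop_bound[OF C])
    fix x
    have "norm (ap (opm m) x) = l2norm (mat_apply m (vc x))" by (simp add: l2norm_vc[symmetric] vc_ap_opm[OF bm])
    also have "\<dots> \<le> C * l2norm (vc x)" using main[of "vc x"] by simp
    finally show "norm (ap (opm m) x) \<le> C * norm x" by (simp add: l2norm_vc)
  qed
qed

lemma schur_gram:
  fixes a b :: "'x \<Rightarrow> 'x ell2" and t r :: "'x mat"
  assumes t: "\<And>i j. t i j = cinner (b j) (a i)"
    and na: "\<And>i. (norm (a i))\<^sup>2 \<le> \<alpha>" and nb: "\<And>j. (norm (b j))\<^sup>2 \<le> \<beta>"
    and r: "bounded_mat r" "norm (opm r) \<le> 1"
  shows "bounded_mat (schur_prod t r)" "norm (opm (schur_prod t r)) \<le> sqrt \<alpha> * sqrt \<beta>"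
proof -
  have a0: "\<alpha> \<ge> 0" using na[of undefined] by (metis order_trans zero_le_power2)
  have b0: "\<beta> \<ge> 0" using nb[of undefined] by (metis order_trans zero_le_power2)
  have nai: "norm (a i) \<le> sqrt \<alpha>" for i using real_sqrt_le_mono[OF na[of i]] by simp
  have nbj: "norm (b j) \<le> sqrt \<beta>" for j using real_sqrt_le_mono[OF nb[of j]] by simp
  have rr: "r i j = vc (ap (opm r) (ket j)) i" for i j
    using matof_opm[OF r(1)] by (metis matof_def)
  have tb: "cmod (t i j) \<le> sqrt \<alpha> * sqrt \<beta>" for i j
  proof -
    have "cmod (t i j) \<le> norm (b j) * norm (a i)" unfolding t by (rule cinner_cauchy_schwarz)
    also have "\<dots> \<le> sqrt \<beta> * sqrt \<alpha>" by (intro mult_mono nai nbj) (auto simp: b0)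
    finally show ?thesis by (simp add: mult.commute)
  qed
  obtain Cr where rs: "\<And>v i. v \<in> l2 \<Longrightarrow> (\<lambda>j. r i j * v j) summable_on UNIV"
    using r(1) by (rule bounded_matD) blast
  have H1: "(\<lambda>j. schur_prod t r i j * v j) summable_on UNIV" if v: "v \<in> l2" for v i
  proof -
    have "(\<lambda>j. cmod (r i j * v j)) summable_on UNIV"
      using rs[OF v, of i] by (simp add: summable_on_iff_abs_summable_on_complex)
    hence "(\<lambda>j. (sqrt \<alpha> * sqrt \<beta>) * cmod (r i j * v j)) summable_on UNIV"
      by (rule summable_on_cmult_right)
    hence "(\<lambda>j. cmod (schur_prod t r i j * v j)) summable_on UNIV"
    proof (rule summable_on_comparison_test)
      fix j
      have "cmod (t i j) * cmod (r i j * v j) \<le> (sqrt \<alpha> * sqrt \<beta>) * cmod (r i j * v j)"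
        by (rule mult_right_mono[OF tb]) simp
      thus "cmod (schur_prod t r i j * v j) \<le> sqrt \<alpha> * sqrt \<beta> * cmod (r i j * v j)"
        by (simp add: schur_prod_def norm_mult mult.assoc)
    qed simp
    thus "(\<lambda>j. schur_prod t r i j * v j) summable_on UNIV"
      by (simp add: summable_on_iff_abs_summable_on_complex)
  qed
  have H2: "0 \<le> sqrt \<alpha> * sqrt \<beta>" using a0 b0 by simp
  have H3: "cmod (\<Sum>i\<in>F. \<Sum>j\<in>G. schur_prod t r i j * x j * cnj (y i))
        \<le> sqrt \<alpha> * sqrt \<beta> * sqrt (\<Sum>j\<in>G. (cmod (x j))\<^sup>2) * sqrt (\<Sum>i\<in>F. (cmod (y i))\<^sup>2)"
    if F: "finite F" and G: "finite G" for F G :: "'x set" and x y :: "'x \<Rightarrow> complex"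
  proof -
    have "cmod (\<Sum>i\<in>F. \<Sum>j\<in>G. schur_prod t r i j * x j * cnj (y i))
        = cmod (\<Sum>i\<in>F. \<Sum>j\<in>G. vc (ap (opm r) (ket j)) i * cinner (b j) (a i) * x j * cnj (y i))"
      by (simp add: schur_prod_def t rr mult_ac)
    also have "\<dots> \<le> sqrt \<alpha> * sqrt \<beta> * sqrt (\<Sum>j\<in>G. (cmod (x j))\<^sup>2) * sqrt (\<Sum>i\<in>F. (cmod (y i))\<^sup>2)"
      by (rule schur_finite_bound[OF na nb r(2) F G])
    finally show ?thesis .
  qed
  show "bounded_mat (schur_prod t r)" "norm (opm (schur_prod t r)) \<le> sqrt \<alpha> * sqrt \<beta>"
    using bilinear_bounded_mat[of "schur_prod t r" "sqrt \<alpha> * sqrt \<beta>", OF H1 H2 H3] by blast+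
qed



lemma cinner_vc: "l2inner (vc x) (vc y) = cinner x y"
  by (simp add: cinner.rep_eq)

lemma positive_mat_iff: "positive_mat s \<longleftrightarrow> bounded_mat s \<and> pos (opm s)"
proof (cases "bounded_mat s")
  case True
  have "(\<forall>v\<in>l2. l2inner (mat_apply s v) v \<in> \<real> \<and> 0 \<le> Re (l2inner (mat_apply s v) v)) \<longleftrightarrow> pos (opm s)"
  proof
    assume h: "\<forall>v\<in>l2. l2inner (mat_apply s v) v \<in> \<real> \<and> 0 \<le> Re (l2inner (mat_apply s v) v)"
    show "pos (opm s)" unfolding pos_def
    proof (intro allI)
      fix x
      have "l2inner (mat_apply s (vc x)) (vc x) = cinner (ap (opm s) x) x"
        by (simp add: vc_ap_opm[OF True, symmetric] cinner_vc)
      thus "cinner (ap (opm s) x) x \<in> \<real> \<and> 0 \<le> Re (cinner (ap (opm s) x) x)"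
        using h vc_l2[of x] by metis
    qed
  next
    assume p: "pos (opm s)"
    show "\<forall>v\<in>l2. l2inner (mat_apply s v) v \<in> \<real> \<and> 0 \<le> Re (l2inner (mat_apply s v) v)"
    proof
      fix v :: "'a \<Rightarrow> complex" assume v: "v \<in> l2"
      have e: "l2inner (mat_apply s v) v = cinner (ap (opm s) (Abs_ell2 v)) (Abs_ell2 v)"
        by (simp add: cinner.rep_eq vc_ap_opm[OF True] vc_Abs v)
      show "l2inner (mat_apply s v) v \<in> \<real> \<and> 0 \<le> Re (l2inner (mat_apply s v) v)"
        using p unfolding e pos_def by blast
    qed
  qed
  thus ?thesis using True by (simp add: positive_mat_def)
qed (simp add: positive_mat_def)

lemma mat_abs_matof: "mat_abs (matof A) = matof (sqrtop (adj A * A))"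
proof -
  define S where "S = sqrtop (adj A * A)"
  have X: "pos (adj A * A)" by (rule pos_adj_mult)
  have e: "mat_mult (adjoint (matof A)) (matof A) = matof (adj A * A)"
    by (simp add: matof_adj[symmetric] mat_mult_matof)
  show ?thesis unfolding mat_abs_def e S_def[symmetric]
  proof (rule the_equality)
    show "positive_mat (matof S) \<and> mat_mult (matof S) (matof S) = matof (adj A * A)"
      using sqrtop_props[OF X] by (simp add: positive_mat_iff bounded_matof mat_mult_matof S_def)
  next
    fix s assume h: "positive_mat s \<and> mat_mult s s = matof (adj A * A)"
    hence b: "bounded_mat s" and p: "pos (opm s)" by (auto simp: positive_mat_iff)
    have "matof (opm s * opm s) = matof (adj A * A)" using h b by (simp add: mat_mult_opm)
    hence "opm s * opm s = adj A * A" by (simp add: matof_inject)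
    hence "opm s = S" unfolding S_def by (rule sqrtop_unique[OF X p])
    thus "s = matof S" using matof_opm[OF b] by simp
  qed
qed

lemma diag_bounded: "bounded_mat (diag_part (matof A))"
proof -
  define d where "d i = matof A i i" for i
  have dle: "cmod (d i) \<le> norm A" for i
  proof -
    have "cmod (d i) \<le> norm (ap A (ket i))" unfolding d_def matof_def by (rule coord_le_norm)
    also have "\<dots> \<le> norm A" using norm_ap[of A "ket i"] by simp
    finally show ?thesis .
  qed
  have row: "((\<lambda>j. diag_part (matof A) i j * v j) has_sum (d i * v i)) UNIV" for i and v :: "'a \<Rightarrow> complex"
  proof -
    have "((\<lambda>j. diag_part (matof A) i j * v j) has_sum (\<Sum>j\<in>{i}. diag_part (matof A) i j * v j)) UNIV"
      by (rule has_sum_finite_support) (auto simp: diag_part_def)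
    thus ?thesis by (simp add: diag_part_def d_def)
  qed
  have ma: "mat_apply (diag_part (matof A)) v = (\<lambda>i. d i * v i)" for v
    using row by (auto simp: mat_apply_def intro!: ext infsumI)
  show ?thesis unfolding bounded_mat_def
  proof (intro exI[of _ "norm A"] ballI conjI allI)
    fix v :: "'a \<Rightarrow> complex" and i assume v: "v \<in> l2"
    show "(\<lambda>j. diag_part (matof A) i j * v j) summable_on UNIV" using row by (rule has_sum_imp_summable)
    have vs: "(\<lambda>j. (cmod (v j))\<^sup>2) summable_on UNIV" using v by (simp add: l2_def)
    have b: "(\<Sum>i\<in>F. (cmod (d i * v i))\<^sup>2) \<le> (norm A)\<^sup>2 * infsum (\<lambda>j. (cmod (v j))\<^sup>2) UNIV"
      if "finite F" for F
    proof -
      have "(\<Sum>i\<in>F. (cmod (d i * v i))\<^sup>2) \<le> (\<Sum>i\<in>F. (norm A)\<^sup>2 * (cmod (v i))\<^sup>2)"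
        by (intro sum_mono) (auto simp: norm_mult power_mult_distrib intro!: mult_right_mono power_mono dle)
      also have "\<dots> = (norm A)\<^sup>2 * (\<Sum>i\<in>F. (cmod (v i))\<^sup>2)" by (simp add: sum_distrib_left)
      also have "\<dots> \<le> (norm A)\<^sup>2 * infsum (\<lambda>j. (cmod (v j))\<^sup>2) UNIV"
        by (intro mult_left_mono sum_le_infsum_nonneg[OF vs] that) auto
      finally show ?thesis .
    qed
    show "mat_apply (diag_part (matof A)) v \<in> l2" unfolding ma using b by (rule l2_of_bounded)
    have "infsum (\<lambda>i. (cmod (d i * v i))\<^sup>2) UNIV \<le> (norm A)\<^sup>2 * infsum (\<lambda>j. (cmod (v j))\<^sup>2) UNIV"
      using b by (rule l2_of_bounded)
    from real_sqrt_le_mono[OF this]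
    show "l2norm (mat_apply (diag_part (matof A)) v) \<le> norm A * l2norm v"
      by (simp add: ma l2norm_def real_sqrt_mult)
  qed
qed

lemma diag_entry_le: "cmod (vc (ap A (ket i)) i) \<le> norm (opm (diag_part (matof A)))"
proof -
  have b: "bounded_mat (diag_part (matof A))" by (rule diag_bounded)
  have "vc (ap (opm (diag_part (matof A))) (ket i)) i = vc (ap A (ket i)) i"
    unfolding vc_ap_opm[OF b] mat_apply_ket by (simp add: diag_part_def matof_def)
  hence "cmod (vc (ap A (ket i)) i) \<le> norm (ap (opm (diag_part (matof A))) (ket i))"
    by (metis coord_le_norm)
  also have "\<dots> \<le> norm (opm (diag_part (matof A)))" using norm_ap[of _ "ket i"] by simp
  finally show ?thesis .
qed

lemma opnorm_diag: "opnorm (diag_part (matof A)) = ennreal (norm (opm (diag_part (matof A))))"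
  by (rule opnorm_opm[OF diag_bounded])

lemma schur_one: "schur_prod t (matof 1) = diag_part t"
  by (auto simp: schur_prod_def matof_def diag_part_def vc_ket intro!: ext)

lemma schur_norm_ge_diag: "opnorm (diag_part t) \<le> schur_norm t"
proof -
  have "opnorm (schur_prod t (matof 1)) \<in> {opnorm (schur_prod t r) | r. bounded_mat r \<and> opnorm r \<le> 1}"
    by (auto simp: bounded_matof opnorm_matof intro!: exI[of _ "matof 1"])
  hence "opnorm (schur_prod t (matof 1)) \<le> schur_norm t" unfolding schur_norm_def by (rule Sup_upper)
  thus ?thesis by (simp add: schur_one)
qed

lemma schur_norm_le:
  assumes "\<And>r. bounded_mat r \<Longrightarrow> norm (opm r) \<le> 1 \<Longrightarrow>
     bounded_mat (schur_prod t r) \<and> norm (opm (schur_prod t r)) \<le> C"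
  shows "schur_norm t \<le> ennreal C"
  unfolding schur_norm_def
proof (rule Sup_least)
  fix y assume "y \<in> {opnorm (schur_prod t r) | r. bounded_mat r \<and> opnorm r \<le> 1}"
  then obtain r where r: "bounded_mat r" "opnorm r \<le> 1" and y: "y = opnorm (schur_prod t r)" by auto
  have "norm (opm r) \<le> 1" using r by (simp add: opnorm_opm)
  from assms[OF r(1) this] show "y \<le> ennreal C"
    by (simp add: y opnorm_opm ennreal_leI)
qed

lemma schur_norm_pos:
  fixes S :: "'a bop"
  assumes S: "pos S"
  shows "schur_norm (matof S) = ennreal (norm (opm (diag_part (matof S))))"
proof (rule antisym)
  define d where "d = norm (opm (diag_part (matof S)))"
  define K where "K = sqrtop S"
  have hK: "adj K = K" unfolding K_def by (rule pos_herm[OF sqrtop_props(1)[OF S]])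
  have KK: "K * K = S" unfolding K_def by (rule sqrtop_props(2)[OF S])
  have ent: "matof S i j = cinner (ap K (ket j)) (ap K (ket i))" for i j
  proof -
    have "matof S i j = cinner (ap S (ket j)) (ket i)" by (simp add: matof_def)
    also have "\<dots> = cinner (ap K (ap K (ket j))) (ket i)" by (simp only: KK[symmetric] ap_simps)
    also have "\<dots> = cinner (ap K (ket j)) (ap K (ket i))" by (rule herm_cinner[OF hK])
    finally show ?thesis .
  qed
  have nk: "(norm (ap K (ket i)))\<^sup>2 \<le> d" for i
  proof -
    have "(norm (ap K (ket i)))\<^sup>2 = Re (cinner (ap K (ket i)) (ap K (ket i)))" by (simp add: cinner_self)
    also have "\<dots> = Re (vc (ap S (ket i)) i)" using ent[of i i] by (simp add: matof_def)
    also have "\<dots> \<le> cmod (vc (ap S (ket i)) i)" by (rule complex_Re_le_cmod)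
    also have "\<dots> \<le> d" unfolding d_def by (rule diag_entry_le)
    finally show ?thesis .
  qed
  have d0: "d \<ge> 0" by (simp add: d_def)
  show "schur_norm (matof S) \<le> ennreal d"
  proof (rule schur_norm_le)
    fix r :: "'a mat" assume r: "bounded_mat r" "norm (opm r) \<le> 1"
    from schur_gram[where t="matof S" and a="\<lambda>i. ap K (ket i)" and b="\<lambda>j. ap K (ket j)"
        and \<alpha>=d and \<beta>=d and r=r, OF ent nk nk r]
    show "bounded_mat (schur_prod (matof S) r) \<and> norm (opm (schur_prod (matof S) r)) \<le> d"
      using d0 by simp
  qed
  show "ennreal d \<le> schur_norm (matof S)"
    using schur_norm_ge_diag[of "matof S"] by (simp add: opnorm_diag d_def)
qed



lemma main_bound:
  fixes A :: "'a bop" and r :: "'a mat" and e :: real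
  defines "P \<equiv> sqrtop (adj A * A)" and "Q \<equiv> sqrtop (A * adj A)"
  defines "dP \<equiv> norm (opm (diag_part (matof P)))" and "dQ \<equiv> norm (opm (diag_part (matof Q)))"
  assumes e: "e > 0" and r: "bounded_mat r" "norm (opm r) \<le> 1"
  shows "bounded_mat (schur_prod (matof A) r) \<and> norm (opm (schur_prod (matof A) r)) \<le> sqrt dQ * sqrt (dP + e)"
proof -
  have X: "pos (adj A * A)" by (rule pos_adj_mult)
  have Z: "pos (A * adj A)" using pos_adj_mult[of "adj A"] by simp
  have Pp: "pos P" unfolding P_def by (rule sqrtop_props(1)[OF X])
  have Qp: "pos Q" unfolding Q_def by (rule sqrtop_props(1)[OF Z])
  have QQ: "Q * Q = A * adj A" unfolding Q_def by (rule sqrtop_props(2)[OF Z])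
  have hP: "adj P = P" by (rule pos_herm[OF Pp])
  have hQ: "adj Q = Q" by (rule pos_herm[OF Qp])
  have AP: "A * P = Q * A"
    unfolding P_def Q_def by (rule sqrtop_intertwine[OF X Z]) (simp add: mult.assoc)
  define M where "M = P + e *\<^sub>R 1"
  define N where "N = Q + e *\<^sub>R 1"
  have Mp: "pos M" unfolding M_def using e by (intro pos_add Pp pos_scaleR pos_one) auto
  have hM: "adj M = M" by (rule pos_herm[OF Mp])
  have hN: "adj N = N" by (simp add: N_def adj_add adj_scaleR hQ)
  obtain Mi where Mi: "M * Mi = 1" "Mi * M = 1" using pos_shift_inverse[OF Pp e] unfolding M_def by metis
  obtain Ni where Ni: "N * Ni = 1" "Ni * N = 1" using pos_shift_inverse[OF Qp e] unfolding N_def by metis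
  have AM: "A * M = N * A" by (simp add: M_def N_def algebra_simps AP)
  have NiA: "Ni * A = A * Mi"
  proof -
    have "Ni * A = Ni * A * (M * Mi)" by (simp add: Mi)
    also have "\<dots> = Ni * (A * M) * Mi" by (simp add: mult.assoc)
    also have "\<dots> = (Ni * N) * A * Mi" by (simp add: AM mult.assoc)
    also have "\<dots> = A * Mi" by (simp add: Ni)
    finally show ?thesis .
  qed
  define K where "K = sqrtop M"
  have Kp: "pos K" unfolding K_def by (rule sqrtop_props(1)[OF Mp])
  have hK: "adj K = K" by (rule pos_herm[OF Kp])
  have KK: "K * K = M" unfolding K_def by (rule sqrtop_props(2)[OF Mp])
  have KM: "K * M = M * K" unfolding KK[symmetric] by (simp add: mult.assoc)
  have KMi: "K * Mi = Mi * K" by (rule inv_commute[OF KM Mi])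
  have hMi: "adj Mi = Mi" by (rule inv_herm[OF hM Mi])
  have QN: "Q * N = N * Q" by (simp add: N_def algebra_simps)
  have QNi: "Q * Ni = Ni * Q" by (rule inv_commute[OF QN Ni])
  define G where "G = A * Mi * K"
  have aG: "adj G = K * Mi * adj A" by (simp add: G_def adj_mult hK hMi mult.assoc)
  have GK: "G * K = A"
  proof -
    have "G * K = A * Mi * (K * K)" by (simp add: G_def mult.assoc)
    also have "\<dots> = A" by (simp add: KK Mi mult.assoc)
    finally show ?thesis .
  qed
  have GG: "G * adj G = Ni * (Q * Q)"
  proof -
    have "G * adj G = A * Mi * (K * K) * Mi * adj A" unfolding aG by (simp add: G_def mult.assoc)
    also have "\<dots> = A * (Mi * M) * Mi * adj A" by (simp add: KK mult.assoc)
    also have "\<dots> = (A * Mi) * adj A" by (simp add: Mi)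
    also have "\<dots> = Ni * (Q * Q)" by (simp add: NiA[symmetric] QQ mult.assoc)
    finally show ?thesis .
  qed
  have ent: "matof A i j = cinner (ap K (ket j)) (ap (adj G) (ket i))" for i j
  proof -
    have "matof A i j = cinner (ap A (ket j)) (ket i)" by (simp add: matof_def)
    also have "\<dots> = cinner (ap G (ap K (ket j))) (ket i)" by (simp only: GK[symmetric] ap_simps)
    also have "\<dots> = cinner (ap K (ket j)) (ap (adj G) (ket i))" by (rule adj_cinner)
    finally show ?thesis .
  qed
  have nb: "(norm (ap K (ket j)))\<^sup>2 \<le> dP + e" for j
  proof -
    have "(norm (ap K (ket j)))\<^sup>2 = Re (cinner (ap K (ket j)) (ap K (ket j)))" by (simp add: cinner_self)
    also have "\<dots> = Re (cinner (ap (K * K) (ket j)) (ket j))" by (simp add: herm_cinner[OF hK])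
    also have "\<dots> = Re (cinner (ap P (ket j)) (ket j)) + e"
      by (simp add: KK M_def cinner_add_left vc_ket)
    also have "Re (cinner (ap P (ket j)) (ket j)) \<le> cmod (vc (ap P (ket j)) j)"
      by (simp add: complex_Re_le_cmod)
    also have "\<dots> \<le> dP" unfolding dP_def by (rule diag_entry_le)
    finally show ?thesis by simp
  qed
  have na: "(norm (ap (adj G) (ket i)))\<^sup>2 \<le> dQ" for i
  proof -
    define x :: "'a ell2" where "x = ket i"
    define u where "u = ap Ni x"
    have xu: "x = ap N u" by (simp add: u_def Ni flip: ap_simps)
    have "(norm (ap (adj G) x))\<^sup>2 = Re (cinner (ap (adj G) x) (ap (adj G) x))" by (simp add: cinner_self)
    also have "\<dots> = Re (cinner (ap (G * adj G) x) x)" by (simp add: adj_cinner)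
    also have "G * adj G = Q - e *\<^sub>R (Ni * Q)"
    proof -
      have "G * adj G = Ni * (N - e *\<^sub>R 1) * Q" by (simp add: GG N_def mult.assoc)
      also have "\<dots> = (Ni * N) * Q - e *\<^sub>R (Ni * Q)" by (simp add: algebra_simps)
      finally show ?thesis by (simp add: Ni)
    qed
    also have "Re (cinner (ap (Q - e *\<^sub>R (Ni * Q)) x) x) = Re (cinner (ap Q x) x) - e * Re (cinner (ap (Ni * Q) x) x)"
      by (simp add: cinner_diff_left)
    also have "Re (cinner (ap (Ni * Q) x) x) \<ge> 0"
    proof -
      have h1: "ap (Ni * Q) x = ap Q u" by (simp add: QNi[symmetric] u_def)
      have "cinner (ap (Ni * Q) x) x = cinner (ap Q u) (ap N u)"
        by (simp only: h1) (simp only: xu[symmetric])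
      also have "\<dots> = cinner (ap Q u) (ap Q u) + e * cinner (ap Q u) u"
        by (simp add: N_def cinner_add_right)
      finally have "Re (cinner (ap (Ni * Q) x) x) = (norm (ap Q u))\<^sup>2 + e * qf Q u"
        by (simp add: cinner_self qf_def)
      thus ?thesis using pos_qf_nonneg[OF Qp, of u] e by simp
    qed
    hence "Re (cinner (ap Q x) x) - e * Re (cinner (ap (Ni * Q) x) x) \<le> Re (cinner (ap Q x) x)"
      using e by simp
    also have "Re (cinner (ap Q x) x) \<le> cmod (vc (ap Q (ket i)) i)"
      by (simp add: x_def complex_Re_le_cmod)
    also have "\<dots> \<le> dQ" unfolding dQ_def by (rule diag_entry_le)
    finally show ?thesis by (simp add: x_def)
  qed
  from schur_gram[where t="matof A" and a="\<lambda>i. ap (adj G) (ket i)" and b="\<lambda>j. ap K (ket j)"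
      and \<alpha>=dQ and \<beta>="dP + e" and r=r, OF ent na nb r]
  show ?thesis by simp
qed

lemma ennsqrt_ennreal: "0 \<le> x \<Longrightarrow> ennsqrt (ennreal x) = ennreal (sqrt x)"
  by (simp add: ennsqrt_def)

lemma le_eps_sqrt:
  fixes x a b :: real
  assumes h: "\<And>e. e > 0 \<Longrightarrow> x \<le> sqrt a * sqrt (b + e)"
  shows "x \<le> sqrt a * sqrt b"
proof (rule tendsto_le[OF trivial_limit_sequentially])
  have L: "(\<lambda>n. b + inverse (real (Suc n))) \<longlonglongrightarrow> b + 0"
    by (rule tendsto_add[OF tendsto_const LIMSEQ_inverse_real_of_nat])
  show "(\<lambda>n. sqrt a * sqrt (b + inverse (real (Suc n)))) \<longlonglongrightarrow> sqrt a * sqrt b"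
    using tendsto_mult[OF tendsto_const tendsto_real_sqrt[OF L], of "sqrt a"] by simp
  show "(\<lambda>n. x) \<longlonglongrightarrow> x" by simp
  show "\<forall>\<^sub>F n in sequentially. x \<le> sqrt a * sqrt (b + inverse (real (Suc n)))"
    by (intro always_eventually allI h) simp
qed

theorem proposition4p1:
  fixes T :: "'x mat"
  assumes "bounded_mat T"
  shows "schur_norm T \<le> ennsqrt (opnorm (diag_part (mat_abs (adjoint T))))
                        * ennsqrt (opnorm (diag_part (mat_abs T)))
     \<and> ennsqrt (opnorm (diag_part (mat_abs (adjoint T)))) * ennsqrt (opnorm (diag_part (mat_abs T)))
       = ennsqrt (schur_norm (mat_abs (adjoint T))) * ennsqrt (schur_norm (mat_abs T))"
proof -
  define A where "A = opm T"
  have TA: "T = matof A" by (simp add: A_def matof_opm[OF assms])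
  define P where "P = sqrtop (adj A * A)"
  define Q where "Q = sqrtop (A * adj A)"
  define dP where "dP = norm (opm (diag_part (matof P)))"
  define dQ where "dQ = norm (opm (diag_part (matof Q)))"
  have X: "pos (adj A * A)" by (rule pos_adj_mult)
  have Z: "pos (A * adj A)" using pos_adj_mult[of "adj A"] by simp
  have Pp: "pos P" unfolding P_def by (rule sqrtop_props(1)[OF X])
  have Qp: "pos Q" unfolding Q_def by (rule sqrtop_props(1)[OF Z])
  have absT: "mat_abs T = matof P" by (simp add: TA P_def mat_abs_matof)
  have absT': "mat_abs (adjoint T) = matof Q"
    by (simp add: TA Q_def matof_adj[symmetric] mat_abs_matof)
  have oP: "opnorm (diag_part (mat_abs T)) = ennreal dP" by (simp add: absT dP_def opnorm_diag)
  have oQ: "opnorm (diag_part (mat_abs (adjoint T))) = ennreal dQ" by (simp add: absT' dQ_def opnorm_diag)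
  have dP0: "dP \<ge> 0" and dQ0: "dQ \<ge> 0" by (simp_all add: dP_def dQ_def)
  have rhs: "ennsqrt (opnorm (diag_part (mat_abs (adjoint T)))) * ennsqrt (opnorm (diag_part (mat_abs T)))
      = ennreal (sqrt dQ * sqrt dP)"
    by (simp add: oP oQ ennsqrt_ennreal dP0 dQ0 ennreal_mult)
  have part1: "schur_norm T \<le> ennreal (sqrt dQ * sqrt dP)"
  proof (rule schur_norm_le)
    fix r :: "'x mat" assume r: "bounded_mat r" "norm (opm r) \<le> 1"
    have b: "bounded_mat (schur_prod T r)"
      using main_bound[of 1 r A] r by (simp add: TA)
    have "norm (opm (schur_prod T r)) \<le> sqrt dQ * sqrt dP"
    proof (rule le_eps_sqrt)
      fix e :: real assume "e > 0"
      from main_bound[OF this r, of A] show "norm (opm (schur_prod T r)) \<le> sqrt dQ * sqrt (dP + e)"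
        by (simp add: TA dP_def dQ_def P_def Q_def)
    qed
    thus "bounded_mat (schur_prod T r) \<and> norm (opm (schur_prod T r)) \<le> sqrt dQ * sqrt dP" using b by simp
  qed
  have sP: "schur_norm (mat_abs T) = ennreal dP" by (simp add: absT dP_def schur_norm_pos[OF Pp])
  have sQ: "schur_norm (mat_abs (adjoint T)) = ennreal dQ" by (simp add: absT' dQ_def schur_norm_pos[OF Qp])
  show ?thesis
    using part1 rhs by (simp add: sP sQ oP oQ)
qed


end
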